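(* Let $\mathcal{H}$ be a real Hilbert space with inner product $\langle\cdot,\cdot\rangle$ and norm $\|\cdot\|$. Let $\Phi:\mathcal{H}\to\mathbb{R}$ be a convex $C^1$ function such that $\arg\min\Phi=\{v\in\mathcal{H}:\Phi(v)=\Phi^*\}$ is nonempty, where $\Phi^*=\min_{x\in\mathcal{H}}\Phi(x)$. Let $c>0$, $\alpha\in[0,1)$, $\gamma(t)=\frac{c}{(1+t)^\alpha}$, and $g\in L^1(0,+\infty;\mathcal{H})$. Let $x\in W^{2,1}_{loc}(0,+\infty;\mathcal{H})$ be a solution of $$\ddot x(t)+\gamma(t)\dot x(t)+\nabla\Phi(x(t))=g(t),\quad t\ge 0,$$ and let $W(t)=\frac12\|\dot x(t)\|^2+\Phi(x(t))-\Phi^*$. Let $\nu\in[\alpha,\frac{1+\alpha}{2}]$ and assume that $\int_0^{+\infty}(1+t)^\nu\|g(t)\|\,dt<\infty$. Then $W(t)=o\left(\frac{1}{t^{2\nu}}\right)$ as $t\to+\infty$, and $\int_0^{+\infty}(1+t)^{2\nu-\alpha}\|\dot x(t)\|^2\,dt<\infty$.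
   Context: $W^{2,1}_{loc}(0,+\infty;\mathcal{H})$ denotes functions whose first and second (weak) derivatives are locally integrable with values in $\mathcal{H}$; $\dot x,\ddot x$ denote the first and second time derivatives. *)

theory Defs
  imports "HOL-Analysis.Analysis" "HOL-Library.Landau_Symbols"
begin

end

theory Submission
  imports Defs
begin


definition NN :: "(real \<Rightarrow> 'a::real_normed_vector) \<Rightarrow> real \<Rightarrow> real \<Rightarrow> real" where
  "NN g s t = integral {s..t} (\<lambda>\<tau>. norm (g \<tau>))"

definition rd :: "(real \<Rightarrow> 'a::real_normed_vector) \<Rightarrow> (real \<Rightarrow> 'b::real_normed_vector) \<Rightarrow> (real \<Rightarrow> 'b)
   \<Rightarrow> (real \<Rightarrow> real) \<Rightarrow> real \<Rightarrow> real \<Rightarrow> bool" where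
  "rd g f f' b a c \<longleftrightarrow> (\<forall>e>0. \<exists>d>0. \<forall>s t. a \<le> s \<longrightarrow> s \<le> t \<longrightarrow> t \<le> c \<longrightarrow> t - s < d \<longrightarrow>
      norm (f t - f s - (t - s) *\<^sub>R f' s) \<le> b s * NN g s t + e * ((t - s) + NN g s t))"

definition lub :: "(real \<Rightarrow> 'a::real_normed_vector) \<Rightarrow> (real \<Rightarrow> real) \<Rightarrow> (real \<Rightarrow> real)
   \<Rightarrow> (real \<Rightarrow> real) \<Rightarrow> real \<Rightarrow> real \<Rightarrow> bool" where
  "lub g Q q k a c \<longleftrightarrow> (\<forall>e>0. \<exists>d>0. \<forall>s t. a \<le> s \<longrightarrow> s \<le> t \<longrightarrow> t \<le> c \<longrightarrow> t - s < d \<longrightarrow>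
      Q t - Q s - (t - s) * q s \<le> k s * NN g s t + e * ((t - s) + NN g s t))"

lemma NN_nonneg:
  assumes "(\<lambda>\<tau>. norm (g \<tau>)) integrable_on {a..c}" "a \<le> s" "s \<le> t" "t \<le> c"
  shows "0 \<le> NN g s t"
  unfolding NN_def
  by (rule integral_nonneg) (use assms integrable_on_subinterval[OF assms(1), of s t] in auto)

lemma NN_add:
  assumes "(\<lambda>\<tau>. norm (g \<tau>)) integrable_on {a..c}" "a \<le> s" "s \<le> u" "u \<le> t" "t \<le> c"
  shows "NN g s u + NN g u t = NN g s t"
  unfolding NN_def
  by (rule Henstock_Kurzweil_Integration.integral_combine) (use assms integrable_on_subinterval[OF assms(1), of s t] in auto)

lemma incr_le0:
  fixes \<psi> M :: "real \<Rightarrow> real"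
  assumes "a \<le> c"
    and M: "\<And>s t. a \<le> s \<Longrightarrow> s \<le> t \<Longrightarrow> t \<le> c \<Longrightarrow> M s \<le> M t"
    and H: "\<And>e. e > 0 \<Longrightarrow> \<exists>d>0. \<forall>s t. a \<le> s \<longrightarrow> s \<le> t \<longrightarrow> t \<le> c \<longrightarrow> t - s < d \<longrightarrow> \<psi> t - \<psi> s \<le> e * (M t - M s)"
  shows "\<psi> c \<le> \<psi> a"
proof -
  have main: "\<psi> c - \<psi> a \<le> e * (M c - M a)" if e: "e > 0" for e
  proof -
    obtain d where d: "d > 0" and dH: "\<forall>s t. a \<le> s \<longrightarrow> s \<le> t \<longrightarrow> t \<le> c \<longrightarrow> t - s < d \<longrightarrow> \<psi> t - \<psi> s \<le> e * (M t - M s)"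
      using H[OF e] by blast
    obtain n :: nat where n: "(c - a) / d < real n" using reals_Archimedean2 by blast
    have npos: "n > 0"
    proof (rule ccontr)
      assume "\<not> n > 0" then have "n = 0" by simp
      with n have "(c - a) / d < 0" by simp
      with d \<open>a \<le> c\<close> show False by (simp add: divide_less_0_iff)
    qed
    define p where "p k = a + real k * (c - a) / real n" for k :: nat
    have p0: "p 0 = a" and pn: "p n = c" using npos by (auto simp: p_def)
    have step: "p (Suc k) - p k = (c - a) / real n" for k
      using npos by (simp add: p_def field_simps)
    have stepd: "(c - a) / real n < d"
      using n npos d by (simp add: field_simps)
    have pmono: "p k \<le> p (Suc k)" for k
      using step \<open>a \<le> c\<close> by (metis diff_ge_0_iff_ge divide_nonneg_nonneg of_nat_0_le_iff)
    have pa: "a \<le> p k" for k using \<open>a \<le> c\<close> by (simp add: p_def)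
    have pc: "p k \<le> c" if "k \<le> n" for k
    proof -
      have "real k * (c - a) / real n \<le> real n * (c - a) / real n"
        using that \<open>a \<le> c\<close> by (intro divide_right_mono mult_right_mono) auto
      then show ?thesis using npos by (simp add: p_def)
    qed
    have "\<psi> c - \<psi> a = (\<Sum>k<n. \<psi> (p (Suc k)) - \<psi> (p k))"
      using sum_lessThan_telescope[of "\<lambda>k. \<psi> (p k)" n] p0 pn by simp
    also have "\<dots> \<le> (\<Sum>k<n. e * (M (p (Suc k)) - M (p k)))"
    proof (rule sum_mono)
      fix k assume "k \<in> {..<n}"
      then have "Suc k \<le> n" by simp
      then show "\<psi> (p (Suc k)) - \<psi> (p k) \<le> e * (M (p (Suc k)) - M (p k))"
        using dH pa pmono pc[of "Suc k"] step stepd by auto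
    qed
    also have "\<dots> = e * (M c - M a)"
      using sum_lessThan_telescope[of "\<lambda>k. M (p k)" n] p0 pn by (simp add: sum_distrib_left[symmetric])
    finally show ?thesis .
  qed
  have Mca: "M a \<le> M c" using M[of a c] \<open>a \<le> c\<close> by simp
  have "\<psi> c - \<psi> a \<le> 0 + e" if "e > 0" for e
  proof -
    have "\<psi> c - \<psi> a \<le> (e / (M c - M a + 1)) * (M c - M a)"
      using main[of "e / (M c - M a + 1)"] that Mca by simp
    also have "\<dots> \<le> e" using that Mca by (simp add: field_simps)
    finally show ?thesis by simp
  qed
  then have "\<psi> c - \<psi> a \<le> 0" by (rule field_le_epsilon)
  then show ?thesis by simp
qed

lemma ucont:
  fixes f :: "real \<Rightarrow> 'b::real_normed_vector"
  assumes "continuous_on {a..c} f" "e > 0"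
  shows "\<exists>d>0. \<forall>s\<in>{a..c}. \<forall>t\<in>{a..c}. \<bar>t - s\<bar> < d \<longrightarrow> norm (f t - f s) < e"
proof -
  have "uniformly_continuous_on {a..c} f"
    using assms(1) by (intro compact_uniformly_continuous) auto
  then show ?thesis using assms(2) unfolding uniformly_continuous_on_def
    by (metis dist_norm dist_real_def)
qed

lemma cbound:
  fixes f :: "real \<Rightarrow> 'b::real_normed_vector"
  assumes "continuous_on {a..c} f"
  shows "\<exists>B>0. \<forall>t\<in>{a..c}. norm (f t) \<le> B"
proof -
  have "bounded (f ` {a..c})"
    using assms by (intro compact_imp_bounded compact_continuous_image) auto
  then show ?thesis by (auto simp: bounded_pos)
qed

lemma kg_integrable:
  fixes k :: "real \<Rightarrow> real"
  assumes k: "continuous_on {a..c} k" and ng: "(\<lambda>\<tau>. norm (g \<tau>)) integrable_on {a..c}"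
  shows "(\<lambda>\<tau>. k \<tau> * norm (g \<tau>)) integrable_on {a..c}"
proof -
  have "(\<lambda>\<tau>. k \<tau> * norm (g \<tau>)) absolutely_integrable_on {a..c}"
  proof (rule absolutely_integrable_bounded_measurable_product_real)
    show "k \<in> borel_measurable (lebesgue_on {a..c})"
      using k by (intro continuous_imp_measurable_on_sets_lebesgue) auto
    show "bounded (k ` {a..c})"
      using k by (intro compact_imp_bounded compact_continuous_image) auto
    show "(\<lambda>\<tau>. norm (g \<tau>)) absolutely_integrable_on {a..c}"
      using ng by (intro nonnegative_absolutely_integrable_1) auto
  qed auto
  then show ?thesis using set_lebesgue_integral_eq_integral(1) by blast
qed

lemma lub_integrate:
  assumes L: "lub g Q q k a c" and ac: "a \<le> c"
    and q: "continuous_on {a..c} q" and k: "continuous_on {a..c} k"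
    and ng: "(\<lambda>\<tau>. norm (g \<tau>)) integrable_on {a..c}"
  shows "Q c - Q a \<le> integral {a..c} q + integral {a..c} (\<lambda>\<tau>. k \<tau> * norm (g \<tau>))"
proof -
  define kg where "kg \<tau> = k \<tau> * norm (g \<tau>)" for \<tau>
  have kgi: "kg integrable_on {a..c}" unfolding kg_def by (rule kg_integrable[OF k ng])
  have qi: "q integrable_on {a..c}" using q by (rule integrable_continuous_real)
  define \<psi> where "\<psi> t = Q t - integral {a..t} q - integral {a..t} kg" for t
  define M where "M t = t + NN g a t" for t
  have split: "integral {a..t} h = integral {a..s} h + integral {s..t} h"
    if "h integrable_on {a..c}" "a \<le> s" "s \<le> t" "t \<le> c" for h :: "real \<Rightarrow> real" and s t
    using Henstock_Kurzweil_Integration.integral_combine[of a s t h] integrable_on_subinterval[OF that(1), of a t] that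
    by auto
  have Msplit: "M t - M s = (t - s) + NN g s t" if "a \<le> s" "s \<le> t" "t \<le> c" for s t
    using NN_add[OF ng, of a s t] that by (simp add: M_def)
  have "\<psi> c \<le> \<psi> a"
  proof (rule incr_le0[OF ac])
    show "M s \<le> M t" if "a \<le> s" "s \<le> t" "t \<le> c" for s t
      using Msplit[OF that] NN_nonneg[OF ng that] that by simp
  next
    fix e :: real assume e: "e > 0"
    define e3 where "e3 = e / 3"
    have e3: "e3 > 0" using e by (simp add: e3_def)
    obtain d1 where d1: "d1 > 0" and d1H: "\<forall>s t. a \<le> s \<longrightarrow> s \<le> t \<longrightarrow> t \<le> c \<longrightarrow> t - s < d1 \<longrightarrow>
      Q t - Q s - (t - s) * q s \<le> k s * NN g s t + e3 * ((t - s) + NN g s t)"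
      using L e3 unfolding lub_def by blast
    obtain d2 where d2: "d2 > 0" and d2H: "\<forall>s\<in>{a..c}. \<forall>t\<in>{a..c}. \<bar>t - s\<bar> < d2 \<longrightarrow> norm (q t - q s) < e3"
      using ucont[OF q e3] by blast
    obtain d3 where d3: "d3 > 0" and d3H: "\<forall>s\<in>{a..c}. \<forall>t\<in>{a..c}. \<bar>t - s\<bar> < d3 \<longrightarrow> norm (k t - k s) < e3"
      using ucont[OF k e3] by blast
    show "\<exists>d>0. \<forall>s t. a \<le> s \<longrightarrow> s \<le> t \<longrightarrow> t \<le> c \<longrightarrow> t - s < d \<longrightarrow> \<psi> t - \<psi> s \<le> e * (M t - M s)"
    proof (intro exI[of _ "min d1 (min d2 d3)"] conjI allI impI)
      show "0 < min d1 (min d2 d3)" using d1 d2 d3 by simp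
      fix s t assume as: "a \<le> s" and st: "s \<le> t" and tc: "t \<le> c" and td: "t - s < min d1 (min d2 d3)"
      have sub: "{s..t} \<subseteq> {a..c}" using as tc by auto
      have N0: "0 \<le> NN g s t" using NN_nonneg[OF ng as st tc] .
      have i1: "(t - s) * (q s - e3) \<le> integral {s..t} q"
      proof -
        have "integral {s..t} (\<lambda>_. q s - e3) \<le> integral {s..t} q"
        proof (rule integral_le)
          show "q integrable_on {s..t}" using integrable_on_subinterval[OF qi sub] .
          fix \<tau> assume "\<tau> \<in> {s..t}"
          then have "norm (q \<tau> - q s) < e3" using d2H as tc td st by auto
          then show "q s - e3 \<le> q \<tau>" by auto
        qed auto
        then show ?thesis using st by simp
      qed
      have i2: "(k s - e3) * NN g s t \<le> integral {s..t} kg"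
      proof -
        have "integral {s..t} (\<lambda>\<tau>. (k s - e3) * norm (g \<tau>)) \<le> integral {s..t} kg"
        proof (rule integral_le)
          show "kg integrable_on {s..t}" using integrable_on_subinterval[OF kgi sub] .
          show "(\<lambda>\<tau>. (k s - e3) * norm (g \<tau>)) integrable_on {s..t}"
            using integrable_cmul[OF integrable_on_subinterval[OF ng sub], of "k s - e3"] by simp
          fix \<tau> assume "\<tau> \<in> {s..t}"
          then have "norm (k \<tau> - k s) < e3" using d3H as tc td st by auto
          then have "k s - e3 \<le> k \<tau>" by auto
          then show "(k s - e3) * norm (g \<tau>) \<le> kg \<tau>" unfolding kg_def
            by (intro mult_right_mono) auto
        qed
        then show ?thesis by (simp add: NN_def)
      qed
      have "\<psi> t - \<psi> s = Q t - Q s - integral {s..t} q - integral {s..t} kg"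
        using split[OF qi as st tc] split[OF kgi as st tc] by (simp add: \<psi>_def)
      also have "\<dots> \<le> (t - s) * q s + k s * NN g s t + e3 * ((t - s) + NN g s t)
                       - (t - s) * (q s - e3) - (k s - e3) * NN g s t"
        using d1H as st tc td i1 i2 by fastforce
      also have "\<dots> = 2 * e3 * ((t - s) + NN g s t)"
        by (simp add: algebra_simps)
      also have "\<dots> \<le> e * ((t - s) + NN g s t)"
        using e3 st N0 by (intro mult_right_mono) (auto simp: e3_def)
      also have "\<dots> = e * (M t - M s)" using Msplit[OF as st tc] by simp
      finally show "\<psi> t - \<psi> s \<le> e * (M t - M s)" .
    qed
  qed
  then show ?thesis unfolding \<psi>_def kg_def[symmetric] by simp
qed


lemma rd_lub:
  fixes f f' :: "real \<Rightarrow> real"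
  assumes "rd g f f' b a c"
  shows "lub g f f' b a c"
  unfolding lub_def
proof (intro allI impI)
  fix e :: real assume "e > 0"
  then obtain d where "d > 0" and H: "\<forall>s t. a \<le> s \<longrightarrow> s \<le> t \<longrightarrow> t \<le> c \<longrightarrow> t - s < d \<longrightarrow>
      norm (f t - f s - (t - s) *\<^sub>R f' s) \<le> b s * NN g s t + e * ((t - s) + NN g s t)"
    using assms unfolding rd_def by blast
  show "\<exists>d>0. \<forall>s t. a \<le> s \<longrightarrow> s \<le> t \<longrightarrow> t \<le> c \<longrightarrow> t - s < d \<longrightarrow>
      f t - f s - (t - s) * f' s \<le> b s * NN g s t + e * ((t - s) + NN g s t)"
  proof (intro exI[of _ d] conjI allI impI)
    fix s t assume h: "a \<le> s" "s \<le> t" "t \<le> c" "t - s < d"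
    have "norm (f t - f s - (t - s) *\<^sub>R f' s) \<le> b s * NN g s t + e * ((t - s) + NN g s t)"
      using H h by blast
    moreover have "f t - f s - (t - s) * f' s \<le> norm (f t - f s - (t - s) *\<^sub>R f' s)" by simp
    ultimately show "f t - f s - (t - s) * f' s \<le> b s * NN g s t + e * ((t - s) + NN g s t)" by linarith
  qed (use \<open>d > 0\<close> in simp)
qed

lemma lub_mono:
  assumes L: "lub g Q q k a c"
    and le: "\<And>t. t \<in> {a..c} \<Longrightarrow> q t \<le> q' t" "\<And>t. t \<in> {a..c} \<Longrightarrow> k t \<le> k' t"
    and ng: "(\<lambda>\<tau>. norm (g \<tau>)) integrable_on {a..c}"
  shows "lub g Q q' k' a c"
  unfolding lub_def
proof (intro allI impI)
  fix e :: real assume "e > 0"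
  then obtain d where "d > 0" and dH: "\<forall>s t. a \<le> s \<longrightarrow> s \<le> t \<longrightarrow> t \<le> c \<longrightarrow> t - s < d \<longrightarrow>
      Q t - Q s - (t - s) * q s \<le> k s * NN g s t + e * ((t - s) + NN g s t)"
    using L unfolding lub_def by blast
  show "\<exists>d>0. \<forall>s t. a \<le> s \<longrightarrow> s \<le> t \<longrightarrow> t \<le> c \<longrightarrow> t - s < d \<longrightarrow>
      Q t - Q s - (t - s) * q' s \<le> k' s * NN g s t + e * ((t - s) + NN g s t)"
  proof (intro exI[of _ d] conjI allI impI)
    fix s t assume h: "a \<le> s" "s \<le> t" "t \<le> c" "t - s < d"
    have N0: "0 \<le> NN g s t" using NN_nonneg[OF ng h(1-3)] .
    have "(t - s) * q s \<le> (t - s) * q' s" using le(1)[of s] h by (intro mult_left_mono) auto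
    moreover have "k s * NN g s t \<le> k' s * NN g s t" using le(2)[of s] h N0 by (intro mult_right_mono) auto
    ultimately show "Q t - Q s - (t - s) * q' s \<le> k' s * NN g s t + e * ((t - s) + NN g s t)"
      using dH h by fastforce
  qed (use \<open>d > 0\<close> in simp)
qed

lemma lub_cong:
  assumes "lub g Q q k a c" "\<And>t. t \<in> {a..c} \<Longrightarrow> Q t = Q' t"
  shows "lub g Q' q k a c"
  unfolding lub_def
proof (intro allI impI)
  fix e :: real assume "e > 0"
  then obtain d where "d > 0" and H: "\<forall>s t. a \<le> s \<longrightarrow> s \<le> t \<longrightarrow> t \<le> c \<longrightarrow> t - s < d \<longrightarrow>
      Q t - Q s - (t - s) * q s \<le> k s * NN g s t + e * ((t - s) + NN g s t)"
    using assms(1) unfolding lub_def by blast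
  show "\<exists>d>0. \<forall>s t. a \<le> s \<longrightarrow> s \<le> t \<longrightarrow> t \<le> c \<longrightarrow> t - s < d \<longrightarrow>
      Q' t - Q' s - (t - s) * q s \<le> k s * NN g s t + e * ((t - s) + NN g s t)"
  proof (intro exI[of _ d] conjI allI impI)
    fix s t assume h: "a \<le> s" "s \<le> t" "t \<le> c" "t - s < d"
    have "Q t = Q' t" "Q s = Q' s" using assms(2) h by auto
    then show "Q' t - Q' s - (t - s) * q s \<le> k s * NN g s t + e * ((t - s) + NN g s t)"
      using H h by metis
  qed (use \<open>d > 0\<close> in simp)
qed

lemma rd_add:
  assumes "rd g f f' b a c" "rd g h h' b' a c"
  shows "rd g (\<lambda>t. f t + h t) (\<lambda>t. f' t + h' t) (\<lambda>t. b t + b' t) a c"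
  unfolding rd_def
proof (intro allI impI)
  fix e :: real assume e: "e > 0"
  obtain d1 where d1: "d1 > 0" and H1: "\<forall>s t. a \<le> s \<longrightarrow> s \<le> t \<longrightarrow> t \<le> c \<longrightarrow> t - s < d1 \<longrightarrow>
      norm (f t - f s - (t - s) *\<^sub>R f' s) \<le> b s * NN g s t + (e/2) * ((t - s) + NN g s t)"
    using assms(1) e unfolding rd_def by (meson half_gt_zero)
  obtain d2 where d2: "d2 > 0" and H2: "\<forall>s t. a \<le> s \<longrightarrow> s \<le> t \<longrightarrow> t \<le> c \<longrightarrow> t - s < d2 \<longrightarrow>
      norm (h t - h s - (t - s) *\<^sub>R h' s) \<le> b' s * NN g s t + (e/2) * ((t - s) + NN g s t)"
    using assms(2) e unfolding rd_def by (meson half_gt_zero)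
  show "\<exists>d>0. \<forall>s t. a \<le> s \<longrightarrow> s \<le> t \<longrightarrow> t \<le> c \<longrightarrow> t - s < d \<longrightarrow>
      norm (f t + h t - (f s + h s) - (t - s) *\<^sub>R (f' s + h' s)) \<le> (b s + b' s) * NN g s t + e * ((t - s) + NN g s t)"
  proof (intro exI[of _ "min d1 d2"] conjI allI impI)
    fix s t assume h: "a \<le> s" "s \<le> t" "t \<le> c" "t - s < min d1 d2"
    have "norm (f t + h t - (f s + h s) - (t - s) *\<^sub>R (f' s + h' s))
        = norm ((f t - f s - (t - s) *\<^sub>R f' s) + (h t - h s - (t - s) *\<^sub>R h' s))"
      by (simp add: algebra_simps scaleR_right_distrib)
    also have "\<dots> \<le> norm (f t - f s - (t - s) *\<^sub>R f' s) + norm (h t - h s - (t - s) *\<^sub>R h' s)"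
      by (rule norm_triangle_ineq)
    also have "\<dots> \<le> (b s + b' s) * NN g s t + e * ((t - s) + NN g s t)"
      using H1 H2 h by (fastforce simp: algebra_simps)
    finally show "norm (f t + h t - (f s + h s) - (t - s) *\<^sub>R (f' s + h' s)) \<le> (b s + b' s) * NN g s t + e * ((t - s) + NN g s t)" .
  qed (use d1 d2 in simp)
qed

lemma rd_const:
  assumes ng: "(\<lambda>\<tau>. norm (g \<tau>)) integrable_on {a..c}"
  shows "rd g (\<lambda>_. z) (\<lambda>_. 0) (\<lambda>_. 0) a c"
  unfolding rd_def
proof (intro allI impI exI[of _ 1] conjI)
  fix e :: real and s t assume "e > 0" "a \<le> s" "s \<le> t" "t \<le> c"
  then show "norm (z - z - (t - s) *\<^sub>R 0) \<le> 0 * NN g s t + e * ((t - s) + NN g s t)"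
    using NN_nonneg[OF ng] by simp
qed simp

lemma rd_prim:
  fixes f w g :: "real \<Rightarrow> 'b::real_inner"
  assumes P: "\<And>e s t. a \<le> s \<Longrightarrow> s \<le> t \<Longrightarrow> t \<le> c \<Longrightarrow>
                ((\<lambda>\<tau>. (w \<tau> + \<beta>0 *\<^sub>R g \<tau>) \<bullet> e) has_integral ((f t - f s) \<bullet> e)) {s..t}"
    and w: "continuous_on {a..c} w"
    and ng: "(\<lambda>\<tau>. norm (g \<tau>)) integrable_on {a..c}"
  shows "rd g f w (\<lambda>_. \<bar>\<beta>0\<bar>) a c"
  unfolding rd_def
proof (intro allI impI)
  fix e :: real assume e: "e > 0"
  obtain d where d: "d > 0" and dH: "\<forall>s\<in>{a..c}. \<forall>t\<in>{a..c}. \<bar>t - s\<bar> < d \<longrightarrow> norm (w t - w s) < e"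
    using ucont[OF w e] by blast
  show "\<exists>d>0. \<forall>s t. a \<le> s \<longrightarrow> s \<le> t \<longrightarrow> t \<le> c \<longrightarrow> t - s < d \<longrightarrow>
      norm (f t - f s - (t - s) *\<^sub>R w s) \<le> \<bar>\<beta>0\<bar> * NN g s t + e * ((t - s) + NN g s t)"
  proof (intro exI[of _ d] conjI allI impI)
    fix s t assume h: "a \<le> s" "s \<le> t" "t \<le> c" "t - s < d"
    define E0 where "E0 = f t - f s - (t - s) *\<^sub>R w s"
    have sub: "{s..t} \<subseteq> {a..c}" using h by auto
    have N0: "0 \<le> NN g s t" using NN_nonneg[OF ng h(1-3)] .
    have i1: "((\<lambda>\<tau>. (w \<tau> + \<beta>0 *\<^sub>R g \<tau>) \<bullet> E0 - w s \<bullet> E0) has_integral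
               ((f t - f s) \<bullet> E0 - (t - s) * (w s \<bullet> E0))) {s..t}"
      using has_integral_diff[OF P[OF h(1-3), of E0] has_integral_const_real[of "w s \<bullet> E0" s t]] h
      by simp
    have eq: "(f t - f s) \<bullet> E0 - (t - s) * (w s \<bullet> E0) = norm E0 ^ 2"
      by (simp add: E0_def power2_norm_eq_inner inner_diff_left)
    have ngst: "((\<lambda>\<tau>. norm (g \<tau>)) has_integral NN g s t) {s..t}"
      unfolding NN_def using integrable_on_subinterval[OF ng sub] by (simp add: integrable_integral)
    have i2: "((\<lambda>\<tau>. norm E0 * e + (\<bar>\<beta>0\<bar> * norm E0) * norm (g \<tau>)) has_integral
               (norm E0 * e * (t - s) + (\<bar>\<beta>0\<bar> * norm E0) * NN g s t)) {s..t}"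
      using has_integral_add[OF has_integral_const_real[of "norm E0 * e" s t] has_integral_mult_right[OF ngst, of "\<bar>\<beta>0\<bar> * norm E0"]] h
      by (simp add: algebra_simps)
    have pw: "(w \<tau> + \<beta>0 *\<^sub>R g \<tau>) \<bullet> E0 - w s \<bullet> E0 \<le> norm E0 * e + (\<bar>\<beta>0\<bar> * norm E0) * norm (g \<tau>)"
      if "\<tau> \<in> {s..t}" for \<tau>
    proof -
      have wt: "norm (w \<tau> - w s) \<le> e" using dH that h by (smt (verit) atLeastAtMost_iff)
      have "(w \<tau> + \<beta>0 *\<^sub>R g \<tau>) \<bullet> E0 - w s \<bullet> E0 = (w \<tau> - w s) \<bullet> E0 + \<beta>0 * (g \<tau> \<bullet> E0)"
        by (simp add: inner_add_left inner_diff_left)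
      also have "\<dots> \<le> norm (w \<tau> - w s) * norm E0 + \<bar>\<beta>0\<bar> * (norm (g \<tau>) * norm E0)"
      proof (rule add_mono)
        show "(w \<tau> - w s) \<bullet> E0 \<le> norm (w \<tau> - w s) * norm E0" by (rule norm_cauchy_schwarz)
        have "\<beta>0 * (g \<tau> \<bullet> E0) \<le> \<bar>\<beta>0 * (g \<tau> \<bullet> E0)\<bar>" by simp
        also have "\<dots> = \<bar>\<beta>0\<bar> * \<bar>g \<tau> \<bullet> E0\<bar>" by (simp add: abs_mult)
        also have "\<dots> \<le> \<bar>\<beta>0\<bar> * (norm (g \<tau>) * norm E0)"
          by (intro mult_left_mono Cauchy_Schwarz_ineq2) auto
        finally show "\<beta>0 * (g \<tau> \<bullet> E0) \<le> \<bar>\<beta>0\<bar> * (norm (g \<tau>) * norm E0)" .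
      qed
      also have "\<dots> \<le> e * norm E0 + \<bar>\<beta>0\<bar> * (norm (g \<tau>) * norm E0)"
        using wt by (intro add_right_mono mult_right_mono) auto
      finally show ?thesis by (simp add: algebra_simps)
    qed
    have "norm E0 ^ 2 \<le> norm E0 * e * (t - s) + (\<bar>\<beta>0\<bar> * norm E0) * NN g s t"
      using has_integral_le[OF i1 i2 pw] eq by simp
    then have "norm E0 * norm E0 \<le> norm E0 * (e * (t - s) + \<bar>\<beta>0\<bar> * NN g s t)"
      by (simp add: power2_eq_square algebra_simps)
    then have "norm E0 \<le> e * (t - s) + \<bar>\<beta>0\<bar> * NN g s t"
    proof (cases "norm E0 = 0")
      case True
      then show ?thesis using e N0 h(2) by simp
    next
      case False
      then have "norm E0 > 0" by simp
      with \<open>norm E0 * norm E0 \<le> norm E0 * (e * (t - s) + \<bar>\<beta>0\<bar> * NN g s t)\<close> show ?thesis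
        by (simp add: mult_le_cancel_left_pos)
    qed
    also have "\<dots> \<le> \<bar>\<beta>0\<bar> * NN g s t + e * ((t - s) + NN g s t)"
      using e N0 by (simp add: algebra_simps)
    finally show "norm (f t - f s - (t - s) *\<^sub>R w s) \<le> \<bar>\<beta>0\<bar> * NN g s t + e * ((t - s) + NN g s t)"
      by (simp add: E0_def)
  qed (use d in simp)
qed


lemma rd_transfer0:
  assumes R: "rd g0 f f' (\<lambda>_. 0) a c" and Z: "\<And>s t. NN g0 s t = 0"
    and ng: "(\<lambda>\<tau>. norm (g \<tau>)) integrable_on {a..c}"
  shows "rd g f f' (\<lambda>_. 0) a c"
  unfolding rd_def
proof (intro allI impI)
  fix e :: real assume "e > 0"
  then obtain d where "d > 0" and H: "\<forall>s t. a \<le> s \<longrightarrow> s \<le> t \<longrightarrow> t \<le> c \<longrightarrow> t - s < d \<longrightarrow>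
      norm (f t - f s - (t - s) *\<^sub>R f' s) \<le> 0 * NN g0 s t + e * ((t - s) + NN g0 s t)"
    using R unfolding rd_def by blast
  show "\<exists>d>0. \<forall>s t. a \<le> s \<longrightarrow> s \<le> t \<longrightarrow> t \<le> c \<longrightarrow> t - s < d \<longrightarrow>
      norm (f t - f s - (t - s) *\<^sub>R f' s) \<le> 0 * NN g s t + e * ((t - s) + NN g s t)"
  proof (intro exI[of _ d] conjI allI impI)
    fix s t assume h: "a \<le> s" "s \<le> t" "t \<le> c" "t - s < d"
    have "norm (f t - f s - (t - s) *\<^sub>R f' s) \<le> e * (t - s)" using H h Z by simp
    also have "\<dots> \<le> e * ((t - s) + NN g s t)"
      using NN_nonneg[OF ng h(1-3)] \<open>e > 0\<close> by (intro mult_left_mono) auto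
    finally show "norm (f t - f s - (t - s) *\<^sub>R f' s) \<le> 0 * NN g s t + e * ((t - s) + NN g s t)" by simp
  qed (use \<open>d > 0\<close> in simp)
qed

lemma NN_zero: "NN (\<lambda>_. 0::'a::real_normed_vector) s t = 0"
  by (simp add: NN_def)

lemma rd_deriv_real:
  fixes f f' :: "real \<Rightarrow> real"
  assumes D: "\<And>\<tau>. \<tau> \<in> {a..c} \<Longrightarrow> (f has_real_derivative f' \<tau>) (at \<tau> within {a..c})"
    and cf: "continuous_on {a..c} f'"
    and ng: "(\<lambda>\<tau>. norm (g \<tau>)) integrable_on {a..c}"
  shows "rd g f f' (\<lambda>_. 0) a c"
proof -
  have "rd (\<lambda>_. 0::real) f f' (\<lambda>_. \<bar>0\<bar>) a c"
  proof (rule rd_prim)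
    fix e s t :: real assume h: "a \<le> s" "s \<le> t" "t \<le> c"
    have "(f' has_integral (f t - f s)) {s..t}"
    proof (rule fundamental_theorem_of_calculus[OF h(2)])
      fix x assume "x \<in> {s..t}"
      then show "(f has_vector_derivative f' x) (at x within {s..t})"
        using D[of x] h by (auto simp: has_real_derivative_iff_has_vector_derivative intro: has_vector_derivative_within_subset)
    qed
    then show "((\<lambda>\<tau>. (f' \<tau> + 0 *\<^sub>R 0) \<bullet> e) has_integral ((f t - f s) \<bullet> e)) {s..t}"
      using has_integral_mult_left[of f' "f t - f s" "{s..t}" e] by simp
  qed (use cf in auto)
  then show ?thesis
    by (intro rd_transfer0[OF _ NN_zero ng]) simp
qed

lemma rd0_deriv:
  fixes f f' :: "real \<Rightarrow> 'b::real_normed_vector"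
  assumes R: "rd (\<lambda>_. 0::real) f f' (\<lambda>_. 0) a c" and cf: "continuous_on {a..c} f'" and tau: "\<tau> \<in> {a..c}"
  shows "(f has_vector_derivative f' \<tau>) (at \<tau> within {a..c})"
  unfolding has_vector_derivative_def has_derivative_within_alt
proof (intro conjI allI impI)
  show "bounded_linear (\<lambda>h. h *\<^sub>R f' \<tau>)" by (rule bounded_linear_scaleR_left)
  fix e :: real assume e: "e > 0"
  then have e2: "e / 2 > 0" by simp
  obtain d1 where d1: "d1 > 0" and H: "\<forall>s t. a \<le> s \<longrightarrow> s \<le> t \<longrightarrow> t \<le> c \<longrightarrow> t - s < d1 \<longrightarrow>
      norm (f t - f s - (t - s) *\<^sub>R f' s) \<le> 0 * NN (\<lambda>_. 0::real) s t + (e/2) * ((t - s) + NN (\<lambda>_. 0::real) s t)"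
    using R e2 unfolding rd_def by blast
  obtain d2 where d2: "d2 > 0" and dH: "\<forall>s\<in>{a..c}. \<forall>t\<in>{a..c}. \<bar>t - s\<bar> < d2 \<longrightarrow> norm (f' t - f' s) < e/2"
    using ucont[OF cf e2] by blast
  show "\<exists>d>0. \<forall>y\<in>{a..c}. norm (y - \<tau>) < d \<longrightarrow> norm (f y - f \<tau> - (y - \<tau>) *\<^sub>R f' \<tau>) \<le> e * norm (y - \<tau>)"
  proof (intro exI[of _ "min d1 d2"] conjI ballI impI)
    fix y assume y: "y \<in> {a..c}" and yd: "norm (y - \<tau>) < min d1 d2"
    show "norm (f y - f \<tau> - (y - \<tau>) *\<^sub>R f' \<tau>) \<le> e * norm (y - \<tau>)"
    proof (cases "\<tau> \<le> y")
      case True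
      then have A: "norm (f y - f \<tau> - (y - \<tau>) *\<^sub>R f' \<tau>) \<le> (e/2) * (y - \<tau>)"
        using H y tau yd by (simp add: NN_zero)
      have B: "(e/2) * (y - \<tau>) = (e * (y - \<tau>)) / 2" by simp
      have "norm (f y - f \<tau> - (y - \<tau>) *\<^sub>R f' \<tau>) \<le> e * (y - \<tau>)"
        using A B norm_ge_zero[of "f y - f \<tau> - (y - \<tau>) *\<^sub>R f' \<tau>"] by linarith
      then show ?thesis using True by simp
    next
      case False
      have h1: "norm (f \<tau> - f y - (\<tau> - y) *\<^sub>R f' y) \<le> (e/2) * (\<tau> - y)"
        using H y tau yd False by (simp add: NN_zero)
      have h2: "norm (f' \<tau> - f' y) \<le> e/2" using dH y tau yd False by (smt (verit) real_norm_def)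
      have "f y - f \<tau> - (y - \<tau>) *\<^sub>R f' \<tau> = - (f \<tau> - f y - (\<tau> - y) *\<^sub>R f' y) + (\<tau> - y) *\<^sub>R (f' \<tau> - f' y)"
        by (simp add: algebra_simps)
      then have "norm (f y - f \<tau> - (y - \<tau>) *\<^sub>R f' \<tau>) \<le> norm (f \<tau> - f y - (\<tau> - y) *\<^sub>R f' y) + \<bar>\<tau> - y\<bar> * norm (f' \<tau> - f' y)"
        by (metis norm_minus_cancel norm_scaleR norm_triangle_ineq)
      also have "\<dots> \<le> (e/2) * (\<tau> - y) + (\<tau> - y) * (e/2)"
        using h1 h2 False by (intro add_mono mult_left_mono) auto
      finally show ?thesis using False by (simp add: algebra_simps)
    qed
  qed (use d1 d2 in simp)
qed

lemma prim_cont: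
  fixes f F :: "real \<Rightarrow> 'b::real_inner"
  assumes P: "\<And>e s t. a \<le> s \<Longrightarrow> s \<le> t \<Longrightarrow> t \<le> c \<Longrightarrow> ((\<lambda>\<tau>. F \<tau> \<bullet> e) has_integral ((f t - f s) \<bullet> e)) {s..t}"
    and nF: "(\<lambda>\<tau>. norm (F \<tau>)) integrable_on {a..c}"
  shows "continuous_on {a..c} f"
proof -
  define H where "H t = integral {a..t} (\<lambda>\<tau>. norm (F \<tau>))" for t
  have Hc: "continuous_on {a..c} H" unfolding H_def by (rule indefinite_integral_continuous_1[OF nF])
  have key: "norm (f t - f s) \<le> H t - H s" if h: "a \<le> s" "s \<le> t" "t \<le> c" for s t
  proof -
    define E0 where "E0 = f t - f s"
    have sub: "{s..t} \<subseteq> {a..c}" using h by auto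
    have Hst: "H t - H s = integral {s..t} (\<lambda>\<tau>. norm (F \<tau>))"
      using Henstock_Kurzweil_Integration.integral_combine[of a s t "\<lambda>\<tau>. norm (F \<tau>)"]
        integrable_on_subinterval[OF nF, of a t] h by (simp add: H_def)
    have i2: "((\<lambda>\<tau>. norm (F \<tau>) * norm E0) has_integral (H t - H s) * norm E0) {s..t}"
      using has_integral_mult_left[OF integrable_integral[OF integrable_on_subinterval[OF nF sub]], of "norm E0"] Hst
      by simp
    have "(f t - f s) \<bullet> E0 \<le> (H t - H s) * norm E0"
      by (rule has_integral_le[OF P[OF h, of E0] i2]) (rule norm_cauchy_schwarz)
    then have "norm E0 ^ 2 \<le> (H t - H s) * norm E0"
      by (simp add: E0_def power2_norm_eq_inner)
    then have "norm E0 * norm E0 \<le> norm E0 * (H t - H s)" by (simp add: power2_eq_square algebra_simps)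
    then show ?thesis
    proof (cases "norm E0 = 0")
      case True
      have "0 \<le> H t - H s" using Hst integral_nonneg[OF integrable_on_subinterval[OF nF sub]] by simp
      then show ?thesis using True by (simp add: E0_def)
    next
      case False
      with \<open>norm E0 * norm E0 \<le> norm E0 * (H t - H s)\<close> show ?thesis
        by (simp add: E0_def mult_le_cancel_left_pos)
    qed
  qed
  have key2: "dist (f x') (f x) \<le> dist (H x') (H x)" if "x \<in> {a..c}" "x' \<in> {a..c}" for x x'
  proof (cases "x \<le> x'")
    case True then show ?thesis using key[of x x'] that by (simp add: dist_norm dist_real_def)
  next
    case False then show ?thesis using key[of x' x] that by (simp add: dist_norm dist_real_def norm_minus_commute)
  qed
  show ?thesis unfolding continuous_on_iff
  proof (intro ballI allI impI)
    fix x and e :: real assume x: "x \<in> {a..c}" and e: "e > 0"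
    then obtain d where "d > 0" and dH: "\<forall>x'\<in>{a..c}. dist x' x < d \<longrightarrow> dist (H x') (H x) < e"
      using Hc unfolding continuous_on_iff by blast
    then show "\<exists>d>0. \<forall>x'\<in>{a..c}. dist x' x < d \<longrightarrow> dist (f x') (f x) < e"
      using key2[OF x] by (meson le_less_trans)
  qed
qed


lemma rd_bilinear:
  fixes u u' :: "real \<Rightarrow> 'c::real_normed_vector" and v v' :: "real \<Rightarrow> 'd::real_normed_vector"
    and P :: "'c \<Rightarrow> 'd \<Rightarrow> 'e::real_normed_vector"
  assumes bl: "bounded_bilinear P" and Pn: "\<And>x y. norm (P x y) \<le> norm x * norm y"
    and ru: "rd g u u' bu a c" and rv: "rd g v v' bv a c"
    and cu': "continuous_on {a..c} u'" and cbu: "continuous_on {a..c} bu" and cu: "continuous_on {a..c} u"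
    and cv: "continuous_on {a..c} v"
    and ng: "(\<lambda>\<tau>. norm (g \<tau>)) integrable_on {a..c}"
  shows "rd g (\<lambda>t. P (u t) (v t)) (\<lambda>t. P (u' t) (v t) + P (u t) (v' t))
            (\<lambda>t. bu t * norm (v t) + norm (u t) * bv t) a c"
  unfolding rd_def
proof (intro allI impI)
  fix e :: real assume e: "e > 0"
  obtain Bu' where Bu'0: "Bu' > 0" and Bu': "\<forall>t\<in>{a..c}. norm (u' t) \<le> Bu'" using cbound[OF cu'] by blast
  obtain Bbu where Bbu0: "Bbu > 0" and Bbu: "\<forall>t\<in>{a..c}. norm (bu t) \<le> Bbu" using cbound[OF cbu] by blast
  obtain Bu where Bu0: "Bu > 0" and Bu: "\<forall>t\<in>{a..c}. norm (u t) \<le> Bu" using cbound[OF cu] by blast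
  obtain Bv where Bv0: "Bv > 0" and Bv: "\<forall>t\<in>{a..c}. norm (v t) \<le> Bv" using cbound[OF cv] by blast
  define Cu where "Cu = Bbu + 1 + Bu'"
  define e1 where "e1 = min 1 (e / (2 * (Bu + Bv + 1)))"
  define \<eta> where "\<eta> = e / (2 * (Cu + 1))"
  have Cu0: "Cu > 0" using Bbu0 Bu'0 by (simp add: Cu_def)
  have e1: "e1 > 0" "e1 \<le> 1" "e1 * (Bu + Bv) \<le> e / 2"
  proof -
    show "e1 > 0" "e1 \<le> 1" using e Bu0 Bv0 by (auto simp: e1_def)
    have "e1 * (Bu + Bv) \<le> (e / (2 * (Bu + Bv + 1))) * (Bu + Bv)"
      using Bu0 Bv0 by (intro mult_right_mono) (auto simp: e1_def)
    also have "\<dots> \<le> e / 2" using e Bu0 Bv0 by (simp add: field_simps)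
    finally show "e1 * (Bu + Bv) \<le> e / 2" .
  qed
  have eta: "\<eta> > 0" "Cu * \<eta> \<le> e / 2" using e Cu0 by (auto simp: \<eta>_def field_simps)
  obtain d1 where d1: "d1 > 0" and H1: "\<forall>s t. a \<le> s \<longrightarrow> s \<le> t \<longrightarrow> t \<le> c \<longrightarrow> t - s < d1 \<longrightarrow>
      norm (u t - u s - (t - s) *\<^sub>R u' s) \<le> bu s * NN g s t + e1 * ((t - s) + NN g s t)"
    using ru e1(1) unfolding rd_def by blast
  obtain d2 where d2: "d2 > 0" and H2: "\<forall>s t. a \<le> s \<longrightarrow> s \<le> t \<longrightarrow> t \<le> c \<longrightarrow> t - s < d2 \<longrightarrow>
      norm (v t - v s - (t - s) *\<^sub>R v' s) \<le> bv s * NN g s t + e1 * ((t - s) + NN g s t)"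
    using rv e1(1) unfolding rd_def by blast
  obtain d3 where d3: "d3 > 0" and H3: "\<forall>s\<in>{a..c}. \<forall>t\<in>{a..c}. \<bar>t - s\<bar> < d3 \<longrightarrow> norm (v t - v s) < \<eta>"
    using ucont[OF cv eta(1)] by blast
  show "\<exists>d>0. \<forall>s t. a \<le> s \<longrightarrow> s \<le> t \<longrightarrow> t \<le> c \<longrightarrow> t - s < d \<longrightarrow>
      norm (P (u t) (v t) - P (u s) (v s) - (t - s) *\<^sub>R (P (u' s) (v s) + P (u s) (v' s)))
        \<le> (bu s * norm (v s) + norm (u s) * bv s) * NN g s t + e * ((t - s) + NN g s t)"
  proof (intro exI[of _ "min d1 (min d2 d3)"] conjI allI impI)
    fix s t assume h: "a \<le> s" "s \<le> t" "t \<le> c" "t - s < min d1 (min d2 d3)"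
    define N where "N = NN g s t"
    define T where "T = (t - s) + N"
    have N0: "0 \<le> N" using NN_nonneg[OF ng h(1-3)] by (simp add: N_def)
    have T0: "0 \<le> T" using N0 h by (simp add: T_def)
    define A where "A = u t - u s - (t - s) *\<^sub>R u' s"
    define B where "B = v t - v s - (t - s) *\<^sub>R v' s"
    define Du where "Du = u t - u s"
    define Dv where "Dv = v t - v s"
    have hA: "norm A \<le> bu s * N + e1 * T" using H1 h by (simp add: A_def N_def T_def)
    have hB: "norm B \<le> bv s * N + e1 * T" using H2 h by (simp add: B_def N_def T_def)
    have hDv: "norm Dv \<le> \<eta>"
    proof -
      have "s \<in> {a..c}" "t \<in> {a..c}" "\<bar>t - s\<bar> < d3" using h by auto
      then have "norm (v t - v s) < \<eta>" using H3 by blast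
      then show ?thesis by (simp add: Dv_def)
    qed
    have sa: "s \<in> {a..c}" using h by simp
    have hDu: "norm Du \<le> Cu * T"
    proof -
      have "Du = A + (t - s) *\<^sub>R u' s" by (simp add: A_def Du_def)
      then have "norm Du \<le> norm A + (t - s) * norm (u' s)"
        using h by (metis abs_of_nonneg diff_ge_0_iff_ge norm_scaleR norm_triangle_ineq)
      also have "\<dots> \<le> (Bbu * N + e1 * T) + (t - s) * Bu'"
      proof (intro add_mono mult_left_mono)
        have "bu s * N \<le> Bbu * N" using Bbu sa N0 by (intro mult_right_mono) (auto simp: abs_le_iff)
        then show "norm A \<le> Bbu * N + e1 * T" using hA by linarith
      qed (use Bu' sa h in auto)
      also have "\<dots> \<le> Bbu * T + 1 * T + Bu' * T"
      proof (intro add_mono)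
        show "Bbu * N \<le> Bbu * T" using Bbu0 h by (intro mult_left_mono) (auto simp: T_def)
        show "e1 * T \<le> 1 * T" using e1 T0 by (intro mult_right_mono) auto
        show "(t - s) * Bu' \<le> Bu' * T" using Bu'0 N0 by (simp add: T_def algebra_simps)
      qed
      finally show ?thesis by (simp add: Cu_def algebra_simps)
    qed
    have ident: "P (u t) (v t) - P (u s) (v s) - (t - s) *\<^sub>R (P (u' s) (v s) + P (u s) (v' s))
        = P A (v s) + P (u s) B + P Du Dv"
    proof -
      have ut: "u t = u s + Du" and vt: "v t = v s + Dv" by (simp_all add: Du_def Dv_def)
      have Du': "Du = A + (t - s) *\<^sub>R u' s" and Dv': "Dv = B + (t - s) *\<^sub>R v' s"
        by (simp_all add: A_def B_def Du_def Dv_def)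
      have q1: "P (u t) (v t) = P (u s) (v s) + P Du (v s) + P (u s) Dv + P Du Dv"
        unfolding ut vt
        by (simp add: bounded_bilinear.add_left[OF bl] bounded_bilinear.add_right[OF bl])
      have q2: "P Du (v s) = P A (v s) + (t - s) *\<^sub>R P (u' s) (v s)"
        unfolding Du' by (simp add: bounded_bilinear.add_left[OF bl] bounded_bilinear.scaleR_left[OF bl])
      have q3: "P (u s) Dv = P (u s) B + (t - s) *\<^sub>R P (u s) (v' s)"
        unfolding Dv' by (simp add: bounded_bilinear.add_right[OF bl] bounded_bilinear.scaleR_right[OF bl])
      show ?thesis
        unfolding q1 q2 q3 by (simp add: scaleR_right_distrib algebra_simps)
    qed
    have "norm (P (u t) (v t) - P (u s) (v s) - (t - s) *\<^sub>R (P (u' s) (v s) + P (u s) (v' s)))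
        \<le> norm A * norm (v s) + norm (u s) * norm B + norm Du * norm Dv"
    proof -
      have "norm (P A (v s) + P (u s) B + P Du Dv) \<le> norm (P A (v s)) + norm (P (u s) B) + norm (P Du Dv)"
        by (meson add_mono norm_triangle_ineq order_trans order_refl)
      also have "\<dots> \<le> norm A * norm (v s) + norm (u s) * norm B + norm Du * norm Dv"
        by (intro add_mono Pn)
      finally show ?thesis unfolding ident .
    qed
    also have "\<dots> \<le> (bu s * N + e1 * T) * norm (v s) + norm (u s) * (bv s * N + e1 * T) + (Cu * T) * \<eta>"
    proof (rule add_mono[OF add_mono])
      show "norm A * norm (v s) \<le> (bu s * N + e1 * T) * norm (v s)"
        using hA by (rule mult_right_mono) simp
      show "norm (u s) * norm B \<le> norm (u s) * (bv s * N + e1 * T)"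
        using hB by (rule mult_left_mono) simp
      show "norm Du * norm Dv \<le> (Cu * T) * \<eta>"
        using hDu hDv Cu0 T0 by (intro mult_mono) auto
    qed
    also have "\<dots> = (bu s * norm (v s) + norm (u s) * bv s) * N + e1 * (norm (v s) + norm (u s)) * T + (Cu * \<eta>) * T"
      by (simp add: algebra_simps)
    also have "\<dots> \<le> (bu s * norm (v s) + norm (u s) * bv s) * N + (e / 2) * T + (e / 2) * T"
    proof (rule add_mono[OF add_mono[OF order_refl]])
      have "norm (v s) \<le> Bv" "norm (u s) \<le> Bu" using Bu Bv sa by auto
      then have "e1 * (norm (v s) + norm (u s)) \<le> e1 * (Bu + Bv)"
        using e1 by (intro mult_left_mono) auto
      then have "e1 * (norm (v s) + norm (u s)) \<le> e / 2" using e1 by linarith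
      then show "e1 * (norm (v s) + norm (u s)) * T \<le> e / 2 * T" using T0 by (rule mult_right_mono)
      show "Cu * \<eta> * T \<le> e / 2 * T" using eta T0 by (intro mult_right_mono) auto
    qed
    also have "\<dots> = (bu s * norm (v s) + norm (u s) * bv s) * NN g s t + e * ((t - s) + NN g s t)"
      by (simp add: N_def T_def algebra_simps)
    finally show "norm (P (u t) (v t) - P (u s) (v s) - (t - s) *\<^sub>R (P (u' s) (v s) + P (u s) (v' s)))
        \<le> (bu s * norm (v s) + norm (u s) * bv s) * NN g s t + e * ((t - s) + NN g s t)" .
  qed (use d1 d2 d3 in simp)
qed

lemma rd_cong:
  assumes "rd g f f' b a c"
    and "\<And>t. t \<in> {a..c} \<Longrightarrow> f2 t = f t" "\<And>t. t \<in> {a..c} \<Longrightarrow> f2' t = f' t"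
    and "\<And>t. t \<in> {a..c} \<Longrightarrow> b2 t = b t"
  shows "rd g f2 f2' b2 a c"
  unfolding rd_def
proof (intro allI impI)
  fix e :: real assume "e > 0"
  then obtain d where "d > 0" and H: "\<forall>s t. a \<le> s \<longrightarrow> s \<le> t \<longrightarrow> t \<le> c \<longrightarrow> t - s < d \<longrightarrow>
      norm (f t - f s - (t - s) *\<^sub>R f' s) \<le> b s * NN g s t + e * ((t - s) + NN g s t)"
    using assms(1) unfolding rd_def by blast
  show "\<exists>d>0. \<forall>s t. a \<le> s \<longrightarrow> s \<le> t \<longrightarrow> t \<le> c \<longrightarrow> t - s < d \<longrightarrow>
      norm (f2 t - f2 s - (t - s) *\<^sub>R f2' s) \<le> b2 s * NN g s t + e * ((t - s) + NN g s t)"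
  proof (intro exI[of _ d] conjI allI impI)
    fix s t assume h: "a \<le> s" "s \<le> t" "t \<le> c" "t - s < d"
    have "f2 t = f t" "f2 s = f s" "f2' s = f' s" "b2 s = b s" using assms(2-4) h by auto
    then show "norm (f2 t - f2 s - (t - s) *\<^sub>R f2' s) \<le> b2 s * NN g s t + e * ((t - s) + NN g s t)"
      using H h by simp
  qed (use \<open>d > 0\<close> in simp)
qed

lemma rd_shift:
  assumes "rd g f f' b a c"
  shows "rd g (\<lambda>t. f t + k) f' b a c"
  using assms unfolding rd_def by simp

lemma rd_pow:
  fixes K p :: real
  assumes a0: "0 \<le> a" and ng: "(\<lambda>\<tau>. norm (g \<tau>)) integrable_on {a..c}"
  shows "rd g (\<lambda>t. K * (1 + t) powr p) (\<lambda>t. K * (p * (1 + t) powr (p - 1))) (\<lambda>_. 0) a c"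
proof (rule rd_deriv_real[OF _ _ ng])
  fix \<tau> assume "\<tau> \<in> {a..c}"
  then have pos: "0 < 1 + \<tau>" using a0 by simp
  show "((\<lambda>t. K * (1 + t) powr p) has_real_derivative K * (p * (1 + \<tau>) powr (p - 1))) (at \<tau> within {a..c})"
    using pos by (auto intro!: derivative_eq_intros)
next
  show "continuous_on {a..c} (\<lambda>t. K * (p * (1 + t) powr (p - 1)))"
    using a0 by (intro continuous_intros) auto
qed

lemma cont_pow:
  fixes a c p :: real
  assumes "0 \<le> a"
  shows "continuous_on {a..c} (\<lambda>t. (1 + t) powr p)"
  using assms by (intro continuous_on_powr continuous_intros) auto


lemma prim_from:
  fixes f F :: "real \<Rightarrow> 'b::real_inner"
  assumes P: "\<And>t. t \<ge> 0 \<Longrightarrow> (F has_integral (f t - f 0)) {0..t}" and h: "0 \<le> s" "s \<le> t"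
  shows "((\<lambda>\<tau>. F \<tau> \<bullet> e) has_integral ((f t - f s) \<bullet> e)) {s..t}"
proof -
  have L: "((\<lambda>\<tau>. F \<tau> \<bullet> e) has_integral ((f r - f 0) \<bullet> e)) {0..r}" if "r \<ge> 0" for r
    using has_integral_linear[OF P[OF that] bounded_linear_inner_left[of e]] by (simp add: o_def)
  have it: "(\<lambda>\<tau>. F \<tau> \<bullet> e) integrable_on {0..t}" using has_integral_integrable[OF L[of t]] h by simp
  have its: "(\<lambda>\<tau>. F \<tau> \<bullet> e) integrable_on {s..t}" by (rule integrable_on_subinterval[OF it]) (use h in auto)
  have "integral {0..s} (\<lambda>\<tau>. F \<tau> \<bullet> e) + integral {s..t} (\<lambda>\<tau>. F \<tau> \<bullet> e) = integral {0..t} (\<lambda>\<tau>. F \<tau> \<bullet> e)"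
    by (rule Henstock_Kurzweil_Integration.integral_combine) (use h it in auto)
  moreover have "integral {0..s} (\<lambda>\<tau>. F \<tau> \<bullet> e) = (f s - f 0) \<bullet> e" using L[of s] h by (simp add: integral_unique)
  moreover have "integral {0..t} (\<lambda>\<tau>. F \<tau> \<bullet> e) = (f t - f 0) \<bullet> e" using L[of t] h by (simp add: integral_unique)
  ultimately have "integral {s..t} (\<lambda>\<tau>. F \<tau> \<bullet> e) = (f t - f s) \<bullet> e" by (simp add: inner_diff_left)
  then show ?thesis using its by (metis integrable_integral)
qed

lemma conv_grad:
  fixes \<Phi> :: "'a::real_inner \<Rightarrow> real"
  assumes convex: "convex_on UNIV \<Phi>" and grad: "(\<Phi> has_derivative (\<lambda>h. G \<bullet> h)) (at u)"
  shows "G \<bullet> (z - u) \<le> \<Phi> z - \<Phi> u"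
proof -
  define d where "d = z - u"
  define \<phi> where "\<phi> = (\<lambda>\<theta>::real. \<Phi> (u + \<theta> *\<^sub>R d))"
  have c\<phi>: "convex_on UNIV \<phi>"
  proof (rule convex_onI)
    fix t x y :: real assume t: "t > 0" "t < 1"
    have "u + ((1 - t) *\<^sub>R x + t *\<^sub>R y) *\<^sub>R d = (1 - t) *\<^sub>R (u + x *\<^sub>R d) + t *\<^sub>R (u + y *\<^sub>R d)"
      by (simp add: algebra_simps)
    then show "\<phi> ((1 - t) *\<^sub>R x + t *\<^sub>R y) \<le> (1 - t) * \<phi> x + t * \<phi> y"
      using convex_onD[OF convex, of t "u + x *\<^sub>R d" "u + y *\<^sub>R d"] t by (simp add: \<phi>_def)
  qed simp
  have lin: "((\<lambda>\<theta>. u + \<theta> *\<^sub>R d) has_derivative (\<lambda>h. h *\<^sub>R d)) (at 0)"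
    by (auto intro!: derivative_eq_intros)
  have g0: "(\<Phi> has_derivative (\<lambda>h. G \<bullet> h)) (at ((\<lambda>\<theta>. u + \<theta> *\<^sub>R d) 0))" using grad by simp
  have "((\<lambda>\<theta>. \<Phi> (u + \<theta> *\<^sub>R d)) has_derivative (\<lambda>h. G \<bullet> (h *\<^sub>R d))) (at 0)"
    using has_derivative_compose[OF lin g0] by simp
  moreover have "(\<lambda>h. G \<bullet> (h *\<^sub>R d)) = (*) (G \<bullet> d)" by (rule ext) (simp add: mult.commute)
  ultimately have d\<phi>: "(\<phi> has_field_derivative (G \<bullet> d)) (at 0 within UNIV)"
    by (simp add: has_field_derivative_def \<phi>_def)
  have "(G \<bullet> d) * (1 - 0) \<le> \<phi> 1 - \<phi> 0"
    by (rule convex_on_imp_above_tangent[OF c\<phi> connected_UNIV _ _ d\<phi>]) auto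
  then show ?thesis by (simp add: \<phi>_def d_def)
qed

lemma qE_alg:
  fixes X Y Gr :: "'a::real_inner" and F b2 b2' bet bet' lam lam' hxi hxi' gam :: real
  assumes b2: "b2 = bet * bet" and conv: "F \<le> X \<bullet> Gr" and lb: "0 \<le> lam * bet"
  shows "(b2' * F + b2 * (Gr \<bullet> Y)) +
      (0 * ((lam *\<^sub>R X + bet *\<^sub>R Y) \<bullet> (lam *\<^sub>R X + bet *\<^sub>R Y)) +
       (1/2) * (((lam' *\<^sub>R X + lam *\<^sub>R Y) + (bet' *\<^sub>R Y + bet *\<^sub>R (- gam *\<^sub>R Y - Gr))) \<bullet> (lam *\<^sub>R X + bet *\<^sub>R Y)
              + (lam *\<^sub>R X + bet *\<^sub>R Y) \<bullet> ((lam' *\<^sub>R X + lam *\<^sub>R Y) + (bet' *\<^sub>R Y + bet *\<^sub>R (- gam *\<^sub>R Y - Gr)))))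
      + (hxi' * (X \<bullet> X) + hxi * (Y \<bullet> X + X \<bullet> Y))
    \<le> (b2' - lam * bet) * F + bet * (lam + bet' - bet * gam) * (Y \<bullet> Y) + (lam * lam' + hxi') * (X \<bullet> X)
       + (lam * (lam + bet' - bet * gam) + bet * lam' + 2 * hxi) * (X \<bullet> Y)"
proof -
  have eq: "(b2' * F + b2 * (Gr \<bullet> Y)) +
      (0 * ((lam *\<^sub>R X + bet *\<^sub>R Y) \<bullet> (lam *\<^sub>R X + bet *\<^sub>R Y)) +
       (1/2) * (((lam' *\<^sub>R X + lam *\<^sub>R Y) + (bet' *\<^sub>R Y + bet *\<^sub>R (- gam *\<^sub>R Y - Gr))) \<bullet> (lam *\<^sub>R X + bet *\<^sub>R Y)
              + (lam *\<^sub>R X + bet *\<^sub>R Y) \<bullet> ((lam' *\<^sub>R X + lam *\<^sub>R Y) + (bet' *\<^sub>R Y + bet *\<^sub>R (- gam *\<^sub>R Y - Gr)))))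
      + (hxi' * (X \<bullet> X) + hxi * (Y \<bullet> X + X \<bullet> Y))
    = (b2' - lam * bet) * F + bet * (lam + bet' - bet * gam) * (Y \<bullet> Y) + (lam * lam' + hxi') * (X \<bullet> X)
       + (lam * (lam + bet' - bet * gam) + bet * lam' + 2 * hxi) * (X \<bullet> Y) + lam * bet * (F - X \<bullet> Gr)"
    unfolding b2
    by (simp add: inner_add_left inner_add_right inner_diff_left inner_diff_right inner_minus_left
        inner_commute[of Y X] inner_commute[of Gr X] inner_commute[of Gr Y] algebra_simps)
  have "lam * bet * (F - X \<bullet> Gr) \<le> 0" using conv lb by (simp add: mult_nonneg_nonpos)
  then show ?thesis unfolding eq by linarith
qed


locale hb =
  fixes \<Phi> :: "'a::{real_inner, complete_space} \<Rightarrow> real"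
    and gradPhi :: "'a \<Rightarrow> 'a"
    and x x' x'' g :: "real \<Rightarrow> 'a"
    and c \<alpha> \<nu> :: real
  assumes convex: "convex_on UNIV \<Phi>"
    and grad: "\<And>u. (\<Phi> has_derivative (\<lambda>h. gradPhi u \<bullet> h)) (at u)"
    and C1: "continuous_on UNIV gradPhi"
    and argmin_ne: "\<exists>v. \<forall>y. \<Phi> v \<le> \<Phi> y"
    and c_pos: "c > 0"
    and alpha: "0 \<le> \<alpha>" "\<alpha> < 1"
    and g_L1: "g integrable_on {0..}" "(\<lambda>t. norm (g t)) integrable_on {0..}"
    and x_prim: "\<And>t. t \<ge> 0 \<Longrightarrow> (x' has_integral (x t - x 0)) {0..t}"
    and x'_prim: "\<And>t. t \<ge> 0 \<Longrightarrow> (x'' has_integral (x' t - x' 0)) {0..t}"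
    and x''_loc: "\<And>T. T \<ge> 0 \<Longrightarrow> (\<lambda>t. norm (x'' t)) integrable_on {0..T}"
    and ode: "AE t in lebesgue. t \<ge> 0 \<longrightarrow>
               x'' t + (c / (1 + t) powr \<alpha>) *\<^sub>R x' t + gradPhi (x t) = g t"
    and nu: "\<alpha> \<le> \<nu>" "\<nu> \<le> (1 + \<alpha>) / 2"
    and g_weighted: "(\<lambda>t. (1 + t) powr \<nu> * norm (g t)) integrable_on {0..}"
begin

definition z where "z = (SOME v. \<forall>y. \<Phi> v \<le> \<Phi> y)"

lemma zmin: "\<Phi> z \<le> \<Phi> y"
  using someI_ex[OF argmin_ne] unfolding z_def by blast

lemma Inf_eq: "(INF y. \<Phi> y) = \<Phi> z"
  by (rule cInf_eq_minimum) (auto simp: zmin)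

lemma ng: "0 \<le> a \<Longrightarrow> (\<lambda>\<tau>. norm (g \<tau>)) integrable_on {a..b}"
  by (rule integrable_on_subinterval[OF g_L1(2)]) auto

lemma prim_x: "0 \<le> s \<Longrightarrow> s \<le> t \<Longrightarrow> ((\<lambda>\<tau>. x' \<tau> \<bullet> e) has_integral ((x t - x s) \<bullet> e)) {s..t}"
  by (rule prim_from[OF x_prim])

lemma prim_x': "0 \<le> s \<Longrightarrow> s \<le> t \<Longrightarrow> ((\<lambda>\<tau>. x'' \<tau> \<bullet> e) has_integral ((x' t - x' s) \<bullet> e)) {s..t}"
  by (rule prim_from[OF x'_prim])

lemma cont_x': assumes "0 \<le> a" shows "continuous_on {a..b} x'"
proof (cases "a \<le> b")
  case True
  show ?thesis
  proof (rule prim_cont)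
    show "((\<lambda>\<tau>. x'' \<tau> \<bullet> e) has_integral ((x' t - x' s) \<bullet> e)) {s..t}" if "a \<le> s" "s \<le> t" "t \<le> b" for e s t
      using prim_x' that assms by simp
    show "(\<lambda>\<tau>. norm (x'' \<tau>)) integrable_on {a..b}"
      by (rule integrable_on_subinterval[OF x''_loc[of b]]) (use assms True in auto)
  qed
qed simp

lemma cont_x: assumes "0 \<le> a" shows "continuous_on {a..b} x"
proof (rule prim_cont)
  show "((\<lambda>\<tau>. x' \<tau> \<bullet> e) has_integral ((x t - x s) \<bullet> e)) {s..t}" if "a \<le> s" "s \<le> t" "t \<le> b" for e s t
    using prim_x that assms by simp
  show "(\<lambda>\<tau>. norm (x' \<tau>)) integrable_on {a..b}"
    using cont_x'[OF assms] by (intro integrable_continuous_real continuous_intros)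
qed

definition gam where "gam t = c / (1 + t) powr \<alpha>"
definition W where "W t = - (gam t) *\<^sub>R x' t - gradPhi (x t)"

lemma cont_Gr: assumes "0 \<le> a" shows "continuous_on {a..b} (\<lambda>t. gradPhi (x t))"
  using continuous_on_compose2[OF C1 cont_x[OF assms]] by simp

lemma cont_gam: assumes "0 \<le> a" shows "continuous_on {a..b} gam"
  unfolding gam_def using assms by (intro continuous_intros) auto

lemma cont_W: assumes "0 \<le> a" shows "continuous_on {a..b} W"
  unfolding W_def using cont_gam[OF assms] cont_x'[OF assms] cont_Gr[OF assms]
  by (intro continuous_intros) auto

lemma negl: obtains N0 where "negligible N0"
  "\<And>t. t \<ge> 0 \<Longrightarrow> t \<notin> N0 \<Longrightarrow> x'' t + gam t *\<^sub>R x' t + gradPhi (x t) = g t"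
proof -
  from ode obtain N where N: "{t \<in> space lebesgue. \<not> (t \<ge> 0 \<longrightarrow>
      x'' t + (c / (1 + t) powr \<alpha>) *\<^sub>R x' t + gradPhi (x t) = g t)} \<subseteq> N"
    "emeasure lebesgue N = 0" "N \<in> sets lebesgue"
    by (rule AE_E)
  have "negligible N" using N(2,3) by (simp add: negligible_iff_null_sets null_sets_def)
  moreover have "x'' t + gam t *\<^sub>R x' t + gradPhi (x t) = g t" if "t \<ge> 0" "t \<notin> N" for t
    using N(1) that by (auto simp: gam_def)
  ultimately show ?thesis using that by blast
qed

lemma prim_x'W: assumes "0 \<le> s" "s \<le> t"
  shows "((\<lambda>\<tau>. (W \<tau> + 1 *\<^sub>R g \<tau>) \<bullet> e) has_integral ((x' t - x' s) \<bullet> e)) {s..t}"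
proof -
  obtain N0 where N0: "negligible N0"
    "\<And>t. t \<ge> 0 \<Longrightarrow> t \<notin> N0 \<Longrightarrow> x'' t + gam t *\<^sub>R x' t + gradPhi (x t) = g t"
    using negl by blast
  show ?thesis
  proof (rule has_integral_spike[OF N0(1) _ prim_x'[OF assms]])
    fix \<tau> assume "\<tau> \<in> {s..t} - N0"
    then have "x'' \<tau> + gam \<tau> *\<^sub>R x' \<tau> + gradPhi (x \<tau>) = g \<tau>" using N0(2) assms by auto
    then have "x'' \<tau> = W \<tau> + 1 *\<^sub>R g \<tau>" unfolding W_def by (simp add: algebra_simps)
    then show "(W \<tau> + 1 *\<^sub>R g \<tau>) \<bullet> e = x'' \<tau> \<bullet> e" by simp
  qed
qed

lemma rd_x: assumes "0 \<le> a" shows "rd g x x' (\<lambda>_. 0) a b"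
proof -
  have "rd g x x' (\<lambda>_. \<bar>0\<bar>) a b"
  proof (rule rd_prim[OF _ cont_x'[OF assms] ng[OF assms]])
    fix e s t assume "a \<le> s" "s \<le> t" "t \<le> b"
    then show "((\<lambda>\<tau>. (x' \<tau> + 0 *\<^sub>R g \<tau>) \<bullet> e) has_integral ((x t - x s) \<bullet> e)) {s..t}"
      using prim_x assms by simp
  qed
  then show ?thesis by simp
qed

lemma rd0_x: assumes "0 \<le> a" shows "rd (\<lambda>_. 0::'a) x x' (\<lambda>_. 0) a b"
proof -
  have "rd (\<lambda>_. 0::'a) x x' (\<lambda>_. \<bar>0\<bar>) a b"
  proof (rule rd_prim[OF _ cont_x'[OF assms]])
    fix e s t assume "a \<le> s" "s \<le> t" "t \<le> b"
    then show "((\<lambda>\<tau>. (x' \<tau> + 0 *\<^sub>R (0::'a)) \<bullet> e) has_integral ((x t - x s) \<bullet> e)) {s..t}"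
      using prim_x assms by simp
  qed (simp add: integrable_0)
  then show ?thesis by simp
qed

lemma rd_x': assumes "0 \<le> a" shows "rd g x' W (\<lambda>_. 1) a b"
proof -
  have "rd g x' W (\<lambda>_. \<bar>1\<bar>) a b"
  proof (rule rd_prim[OF _ cont_W[OF assms] ng[OF assms]])
    fix e s t assume "a \<le> s" "s \<le> t" "t \<le> b"
    then show "((\<lambda>\<tau>. (W \<tau> + 1 *\<^sub>R g \<tau>) \<bullet> e) has_integral ((x' t - x' s) \<bullet> e)) {s..t}"
      using prim_x'W assms by simp
  qed
  then show ?thesis by simp
qed

lemma deriv_x: assumes "0 \<le> a" "\<tau> \<in> {a..b}"
  shows "(x has_vector_derivative x' \<tau>) (at \<tau> within {a..b})"
proof -
  have r: "rd (\<lambda>_. 0::real) x x' (\<lambda>_. 0) a b"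
    by (rule rd_transfer0[OF rd0_x[OF assms(1)] NN_zero]) (simp add: integrable_0)
  show ?thesis by (rule rd0_deriv[OF r cont_x'[OF assms(1)] assms(2)])
qed

lemma rd_F: assumes "0 \<le> a"
  shows "rd g (\<lambda>t. \<Phi> (x t) - \<Phi> z) (\<lambda>t. gradPhi (x t) \<bullet> x' t) (\<lambda>_. 0) a b"
proof (rule rd_deriv_real[OF _ _ ng[OF assms]])
  fix \<tau> assume \<tau>: "\<tau> \<in> {a..b}"
  have dx: "(x has_derivative (\<lambda>h. h *\<^sub>R x' \<tau>)) (at \<tau> within {a..b})"
    using deriv_x[OF assms \<tau>] by (simp add: has_vector_derivative_def)
  have "((\<lambda>t. \<Phi> (x t)) has_derivative (\<lambda>h. gradPhi (x \<tau>) \<bullet> (h *\<^sub>R x' \<tau>))) (at \<tau> within {a..b})"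
    using has_derivative_compose[OF dx grad[of "x \<tau>"]] by simp
  then have "((\<lambda>t. \<Phi> (x t) - \<Phi> z) has_derivative (\<lambda>h. gradPhi (x \<tau>) \<bullet> (h *\<^sub>R x' \<tau>) - 0)) (at \<tau> within {a..b})"
    by (intro has_derivative_diff has_derivative_const)
  moreover have "(\<lambda>h. gradPhi (x \<tau>) \<bullet> (h *\<^sub>R x' \<tau>) - 0) = (*) (gradPhi (x \<tau>) \<bullet> x' \<tau>)"
    by (rule ext) (simp add: mult.commute)
  ultimately show "((\<lambda>t. \<Phi> (x t) - \<Phi> z) has_real_derivative gradPhi (x \<tau>) \<bullet> x' \<tau>) (at \<tau> within {a..b})"
    by (simp add: has_field_derivative_def)
next
  show "continuous_on {a..b} (\<lambda>t. gradPhi (x t) \<bullet> x' t)"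
    using cont_Gr[OF assms] cont_x'[OF assms] by (intro continuous_intros)
qed

lemma conv_ineq: "\<Phi> u - \<Phi> z \<le> (u - z) \<bullet> gradPhi u"
  using conv_grad[OF convex grad[of u], of z] by (simp add: inner_commute inner_diff_left inner_diff_right)

lemma Phi_cont: "continuous_on UNIV \<Phi>"
  using grad by (meson continuous_at_imp_continuous_on has_derivative_continuous)

lemma cont_F: assumes "0 \<le> a" shows "continuous_on {a..b} (\<lambda>t. \<Phi> (x t))"
  using continuous_on_compose2[OF Phi_cont cont_x[OF assms]] by simp

end


lemma Pn_scaleR: "norm (a *\<^sub>R y) \<le> norm a * norm y" for a :: real and y :: "'b::real_normed_vector"
  by simp
lemma Pn_inner: "norm (x \<bullet> y) \<le> norm x * norm y" for x y :: "'b::real_inner"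
  by (simp add: Cauchy_Schwarz_ineq2)
lemma Pn_mult: "norm (a * b) \<le> norm a * norm b" for a b :: real
  by (simp add: abs_mult)

context hb
begin

definition "bet t = (1 + t) powr \<nu>"
definition "dbet t = \<nu> * (1 + t) powr (\<nu> - 1)"
definition "lam t = (2 * \<nu> + 1) * (1 + t) powr (\<nu> - 1)"
definition "dlam t = (2 * \<nu> + 1) * ((\<nu> - 1) * (1 + t) powr (\<nu> - 1 - 1))"
definition "hxi t = ((2 * \<nu> + 1) * c / 2) * (1 + t) powr (2 * \<nu> - 1 - \<alpha>)
                    + (- (2 * \<nu> + 1) * (2 * \<nu>)) * (1 + t) powr (2 * \<nu> - 2)"
definition "dhxi t = ((2 * \<nu> + 1) * c / 2) * ((2 * \<nu> - 1 - \<alpha>) * (1 + t) powr (2 * \<nu> - 1 - \<alpha> - 1))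
                    + (- (2 * \<nu> + 1) * (2 * \<nu>)) * ((2 * \<nu> - 2) * (1 + t) powr (2 * \<nu> - 2 - 1))"
definition "b2 t = (1 + t) powr (2 * \<nu>)"
definition "db2 t = 2 * \<nu> * (1 + t) powr (2 * \<nu> - 1)"
definition "X t = x t - z"
definition "v t = lam t *\<^sub>R X t + bet t *\<^sub>R x' t"
definition "vd t = (dlam t *\<^sub>R X t + lam t *\<^sub>R x' t) + (dbet t *\<^sub>R x' t + bet t *\<^sub>R W t)"
definition "Fv t = \<Phi> (x t) - \<Phi> z"
definition "E t = b2 t * Fv t + (1/2) * (v t \<bullet> v t) + hxi t * (X t \<bullet> X t)"
definition "qE t = (db2 t * Fv t + b2 t * (gradPhi (x t) \<bullet> x' t))
    + (0 * (v t \<bullet> v t) + (1/2) * (vd t \<bullet> v t + v t \<bullet> vd t))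
    + (dhxi t * (X t \<bullet> X t) + hxi t * (x' t \<bullet> X t + X t \<bullet> x' t))"
definition "kE t = bet t * norm (v t)"

lemma Fv_nonneg: "0 \<le> Fv t" using zmin by (simp add: Fv_def)

lemma rd_X: assumes "0 \<le> a" shows "rd g X x' (\<lambda>_. 0) a b"
proof -
  have "rd g (\<lambda>t. x t + - z) x' (\<lambda>_. 0) a b" by (rule rd_shift[OF rd_x[OF assms]])
  then show ?thesis by (rule rd_cong) (auto simp: X_def)
qed

lemma rd_lam: assumes "0 \<le> a" shows "rd g lam dlam (\<lambda>_. 0) a b"
proof -
  have "rd g (\<lambda>t. (2 * \<nu> + 1) * (1 + t) powr (\<nu> - 1)) (\<lambda>t. (2 * \<nu> + 1) * ((\<nu> - 1) * (1 + t) powr (\<nu> - 1 - 1))) (\<lambda>_. 0) a b"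
    by (rule rd_pow[OF assms ng[OF assms]])
  then show ?thesis by (rule rd_cong) (auto simp: lam_def dlam_def)
qed

lemma rd_bet: assumes "0 \<le> a" shows "rd g bet dbet (\<lambda>_. 0) a b"
proof -
  have "rd g (\<lambda>t. 1 * (1 + t) powr \<nu>) (\<lambda>t. 1 * (\<nu> * (1 + t) powr (\<nu> - 1))) (\<lambda>_. 0) a b"
    by (rule rd_pow[OF assms ng[OF assms]])
  then show ?thesis by (rule rd_cong) (auto simp: bet_def dbet_def)
qed

lemma rd_b2: assumes "0 \<le> a" shows "rd g b2 db2 (\<lambda>_. 0) a b"
proof -
  have "rd g (\<lambda>t. 1 * (1 + t) powr (2 * \<nu>)) (\<lambda>t. 1 * ((2 * \<nu>) * (1 + t) powr (2 * \<nu> - 1))) (\<lambda>_. 0) a b"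
    by (rule rd_pow[OF assms ng[OF assms]])
  then show ?thesis by (rule rd_cong) (auto simp: b2_def db2_def)
qed

lemma rd_hxi: assumes "0 \<le> a" shows "rd g hxi dhxi (\<lambda>_. 0) a b"
proof -
  have r1: "rd g (\<lambda>t. ((2 * \<nu> + 1) * c / 2) * (1 + t) powr (2 * \<nu> - 1 - \<alpha>))
     (\<lambda>t. ((2 * \<nu> + 1) * c / 2) * ((2 * \<nu> - 1 - \<alpha>) * (1 + t) powr (2 * \<nu> - 1 - \<alpha> - 1))) (\<lambda>_. 0) a b"
    by (rule rd_pow[OF assms ng[OF assms]])
  have r2: "rd g (\<lambda>t. (- (2 * \<nu> + 1) * (2 * \<nu>)) * (1 + t) powr (2 * \<nu> - 2))
     (\<lambda>t. (- (2 * \<nu> + 1) * (2 * \<nu>)) * ((2 * \<nu> - 2) * (1 + t) powr (2 * \<nu> - 2 - 1))) (\<lambda>_. 0) a b"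
    by (rule rd_pow[OF assms ng[OF assms]])
  show ?thesis by (rule rd_cong[OF rd_add[OF r1 r2]]) (auto simp: hxi_def dhxi_def)
qed

lemma cont_lam: "0 \<le> a \<Longrightarrow> continuous_on {a..b} lam"
  unfolding lam_def by (intro continuous_intros) auto
lemma cont_dlam: "0 \<le> a \<Longrightarrow> continuous_on {a..b} dlam"
  unfolding dlam_def by (intro continuous_intros) auto
lemma cont_bet: "0 \<le> a \<Longrightarrow> continuous_on {a..b} bet"
  unfolding bet_def by (intro continuous_intros) auto
lemma cont_dbet: "0 \<le> a \<Longrightarrow> continuous_on {a..b} dbet"
  unfolding dbet_def by (intro continuous_intros) auto
lemma cont_b2: "0 \<le> a \<Longrightarrow> continuous_on {a..b} b2"
  unfolding b2_def by (intro continuous_intros) auto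
lemma cont_db2: "0 \<le> a \<Longrightarrow> continuous_on {a..b} db2"
  unfolding db2_def by (intro continuous_intros) auto
lemma cont_hxi: "0 \<le> a \<Longrightarrow> continuous_on {a..b} hxi"
  unfolding hxi_def by (intro continuous_intros) auto
lemma cont_dhxi: "0 \<le> a \<Longrightarrow> continuous_on {a..b} dhxi"
  unfolding dhxi_def by (intro continuous_intros) auto
lemma cont_X: "0 \<le> a \<Longrightarrow> continuous_on {a..b} X"
  unfolding X_def using cont_x by (intro continuous_intros) auto
lemma cont_v: "0 \<le> a \<Longrightarrow> continuous_on {a..b} v"
  unfolding v_def using cont_lam cont_X cont_bet cont_x' by (intro continuous_intros) auto
lemma cont_vd: "0 \<le> a \<Longrightarrow> continuous_on {a..b} vd"
  unfolding vd_def using cont_dlam cont_X cont_lam cont_x' cont_dbet cont_bet cont_W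
  by (intro continuous_intros) auto
lemma cont_Fv: "0 \<le> a \<Longrightarrow> continuous_on {a..b} Fv"
  unfolding Fv_def using cont_F by (intro continuous_intros) auto
lemma cont_E: "0 \<le> a \<Longrightarrow> continuous_on {a..b} E"
  unfolding E_def using cont_b2 cont_Fv cont_v cont_hxi cont_X by (intro continuous_intros) auto

lemma bet_pos: "0 \<le> t \<Longrightarrow> 0 < bet t" by (simp add: bet_def)

lemma rd_v: assumes a: "0 \<le> a" shows "rd g v vd bet a b"
proof -
  have r1: "rd g (\<lambda>t. lam t *\<^sub>R X t) (\<lambda>t. dlam t *\<^sub>R X t + lam t *\<^sub>R x' t) (\<lambda>t. 0 * norm (X t) + norm (lam t) * 0) a b"
    by (rule rd_bilinear[OF bounded_bilinear_scaleR Pn_scaleR rd_lam[OF a] rd_X[OF a]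
          cont_dlam[OF a] continuous_on_const cont_lam[OF a] cont_X[OF a] ng[OF a]])
  have r2: "rd g (\<lambda>t. bet t *\<^sub>R x' t) (\<lambda>t. dbet t *\<^sub>R x' t + bet t *\<^sub>R W t) (\<lambda>t. 0 * norm (x' t) + norm (bet t) * 1) a b"
    by (rule rd_bilinear[OF bounded_bilinear_scaleR Pn_scaleR rd_bet[OF a] rd_x'[OF a]
          cont_dbet[OF a] continuous_on_const cont_bet[OF a] cont_x'[OF a] ng[OF a]])
  have absb: "\<bar>bet t\<bar> = bet t" if "t \<in> {a..b}" for t
    using a bet_pos[of t] that by simp
  show ?thesis
    by (rule rd_cong[OF rd_add[OF r1 r2]]) (auto simp: v_def vd_def absb)
qed

lemma rd_E: assumes a: "0 \<le> a" shows "rd g E qE kE a b"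
proof -
  have rvv: "rd g (\<lambda>t. v t \<bullet> v t) (\<lambda>t. vd t \<bullet> v t + v t \<bullet> vd t) (\<lambda>t. bet t * norm (v t) + norm (v t) * bet t) a b"
    by (rule rd_bilinear[OF bounded_bilinear_inner Pn_inner rd_v[OF a] rd_v[OF a]
          cont_vd[OF a] cont_bet[OF a] cont_v[OF a] cont_v[OF a] ng[OF a]])
  have rK: "rd g (\<lambda>t. (1/2) * (v t \<bullet> v t)) (\<lambda>t. 0 * (v t \<bullet> v t) + (1/2) * (vd t \<bullet> v t + v t \<bullet> vd t))
      (\<lambda>t. 0 * norm (v t \<bullet> v t) + norm (1/2::real) * (bet t * norm (v t) + norm (v t) * bet t)) a b"
    by (rule rd_bilinear[OF bounded_bilinear_mult Pn_mult rd_const[OF ng[OF a]] rvv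
          continuous_on_const continuous_on_const continuous_on_const _ ng[OF a]])
       (use cont_v[OF a] in \<open>intro continuous_intros\<close>)
  have rXX: "rd g (\<lambda>t. X t \<bullet> X t) (\<lambda>t. x' t \<bullet> X t + X t \<bullet> x' t) (\<lambda>t. 0 * norm (X t) + norm (X t) * 0) a b"
    by (rule rd_bilinear[OF bounded_bilinear_inner Pn_inner rd_X[OF a] rd_X[OF a]
          cont_x'[OF a] continuous_on_const cont_X[OF a] cont_X[OF a] ng[OF a]])
  have rC: "rd g (\<lambda>t. hxi t * (X t \<bullet> X t)) (\<lambda>t. dhxi t * (X t \<bullet> X t) + hxi t * (x' t \<bullet> X t + X t \<bullet> x' t))
      (\<lambda>t. 0 * norm (X t \<bullet> X t) + norm (hxi t) * (0 * norm (X t) + norm (X t) * 0)) a b"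
    by (rule rd_bilinear[OF bounded_bilinear_mult Pn_mult rd_hxi[OF a] rXX
          cont_dhxi[OF a] continuous_on_const cont_hxi[OF a] _ ng[OF a]])
       (use cont_X[OF a] in \<open>intro continuous_intros\<close>)
  have rA: "rd g (\<lambda>t. b2 t * Fv t) (\<lambda>t. db2 t * Fv t + b2 t * (gradPhi (x t) \<bullet> x' t))
      (\<lambda>t. 0 * norm (Fv t) + norm (b2 t) * 0) a b"
    by (rule rd_bilinear[OF bounded_bilinear_mult Pn_mult rd_b2[OF a] rd_F[OF a, folded Fv_def[abs_def]]
          cont_db2[OF a] continuous_on_const cont_b2[OF a] cont_Fv[OF a] ng[OF a]])
  show ?thesis
    by (rule rd_cong[OF rd_add[OF rd_add[OF rA rK] rC]])
       (use a bet_pos in \<open>auto simp: E_def qE_def kE_def\<close>)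
qed

end


lemma pa: "x powr a * x powr b = x powr c" if "a + b = c" for x a b c :: real
  using that by (simp add: powr_add[symmetric])

context hb
begin

definition "K1 = 12 / c"
definition "Kmax = (2 * (3 * \<nu> + 1) + 8 * \<nu>) / c + 24 / (c * (1 - \<alpha>)) + 1"
definition "T0 = Kmax powr (1 / (1 - \<alpha>))"

lemma nu0: "0 \<le> \<nu>" using nu alpha by linarith
lemma nu1: "\<nu> < 1"
proof -
  have "(1 + \<alpha>) / 2 < 1" using alpha by simp
  then show ?thesis using nu by linarith
qed

lemma Kmax_ge: "1 \<le> Kmax" "2 * (3 * \<nu> + 1) / c \<le> Kmax" "8 * \<nu> / c \<le> Kmax" "24 / (c * (1 - \<alpha>)) \<le> Kmax"
proof -
  have a: "0 \<le> 2 * (3 * \<nu> + 1) / c" "0 \<le> 8 * \<nu> / c" "0 \<le> 24 / (c * (1 - \<alpha>))"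
    using nu0 c_pos alpha by auto
  have "(2 * (3 * \<nu> + 1) + 8 * \<nu>) / c = 2 * (3 * \<nu> + 1) / c + 8 * \<nu> / c" by (simp add: add_divide_distrib)
  then show "1 \<le> Kmax" "2 * (3 * \<nu> + 1) / c \<le> Kmax" "8 * \<nu> / c \<le> Kmax" "24 / (c * (1 - \<alpha>)) \<le> Kmax"
    using a unfolding Kmax_def by linarith+
qed

lemma T0_ge1: "1 \<le> T0"
  unfolding T0_def using Kmax_ge(1) alpha by (intro ge_one_powr_ge_zero) auto

lemma big: assumes "T0 \<le> t" shows "Kmax \<le> (1 + t) powr (1 - \<alpha>)"
proof -
  have "T0 powr (1 - \<alpha>) = Kmax"
    unfolding T0_def using Kmax_ge(1) alpha by (simp add: powr_powr)
  moreover have "T0 powr (1 - \<alpha>) \<le> (1 + t) powr (1 - \<alpha>)"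
    using assms T0_ge1 alpha by (intro powr_mono2) auto
  ultimately show ?thesis by simp
qed

lemma Co1: "0 \<le> t \<Longrightarrow> db2 t - lam t * bet t = - ((1 + t) powr (2 * \<nu> - 1))"
proof -
  assume t: "0 \<le> t"
  have "(1 + t) powr (\<nu> - 1) * (1 + t) powr \<nu> = (1 + t) powr (2 * \<nu> - 1)" by (rule pa) simp
  then show ?thesis unfolding db2_def lam_def bet_def by (simp add: algebra_simps)
qed

lemma C2: assumes "T0 \<le> t"
  shows "bet t * (lam t + dbet t - bet t * gam t) \<le> - (c / 2) * (1 + t) powr (2 * \<nu> - \<alpha>)"
proof -
  define u where "u = 1 + t"
  have u: "1 \<le> u" using assms T0_ge1 by (simp add: u_def)
  define B where "B = u powr \<nu>"
  define A where "A = u powr (\<nu> - 1)"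
  define Gi where "Gi = 1 / u powr \<alpha>"
  define P where "P = u powr (2 * \<nu> - 1)"
  define R where "R = u powr (2 * \<nu> - \<alpha>)"
  define U where "U = u powr (1 - \<alpha>)"
  have e1: "B * A = P" unfolding A_def B_def P_def by (rule pa) simp
  have e2: "B * B * Gi = R"
    unfolding B_def Gi_def R_def using u by (simp add: pa powr_diff)
  have e3: "P * U = R" unfolding P_def U_def R_def by (rule pa) simp
  have P0: "0 \<le> P" by (simp add: P_def)
  have L: "bet t * (lam t + dbet t - bet t * gam t) = (2 * \<nu> + 1) * (B * A) + \<nu> * (B * A) - c * (B * B * Gi)"
    unfolding bet_def lam_def dbet_def gam_def u_def[symmetric] A_def B_def Gi_def by (simp add: algebra_simps)
  have K: "2 * (3 * \<nu> + 1) / c \<le> U" using big[OF assms] Kmax_ge(2) by (simp add: u_def U_def)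
  then have "(3 * \<nu> + 1) \<le> (c / 2) * U" using c_pos by (simp add: field_simps)
  then have "(3 * \<nu> + 1) * P \<le> ((c / 2) * U) * P" using P0 by (rule mult_right_mono)
  also have "\<dots> = (c / 2) * (P * U)" by (simp add: algebra_simps)
  also have "\<dots> = (c / 2) * R" by (simp add: e3)
  finally have "(3 * \<nu> + 1) * P \<le> (c / 2) * R" .
  then show ?thesis unfolding L e1 e2 u_def[symmetric] R_def[symmetric] by (simp add: algebra_simps)
qed

lemma C3: assumes "0 \<le> t" shows "lam t * dlam t + dhxi t \<le> 3 * (1 + t) powr (2 * \<nu> - 3)"
proof -
  define u where "u = 1 + t"
  define k where "k = 2 * \<nu> + 1"
  define A where "A = u powr (\<nu> - 1)"
  define S where "S = u powr (\<nu> - 1 - 1)"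
  define Q where "Q = u powr (2 * \<nu> - 3)"
  define R where "R = u powr (2 * \<nu> - 1 - \<alpha> - 1)"
  have e1: "A * S = Q" unfolding A_def S_def Q_def by (rule pa) simp
  have e2: "u powr (2 * \<nu> - 2 - 1) = Q" unfolding Q_def by simp
  have L: "lam t * dlam t + dhxi t = k * (k * (\<nu> - 1)) * (A * S) + (k * c / 2) * (2 * \<nu> - 1 - \<alpha>) * R
       + (- k * (2 * \<nu>)) * (2 * \<nu> - 2) * u powr (2 * \<nu> - 2 - 1)"
    unfolding lam_def dlam_def dhxi_def u_def[symmetric] k_def[symmetric] A_def S_def R_def by (simp add: algebra_simps)
  have L2: "lam t * dlam t + dhxi t = (k * c / 2) * (2 * \<nu> - 1 - \<alpha>) * R + k * (\<nu> - 1) * (1 - 2 * \<nu>) * Q"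
    unfolding L e1 e2 by (simp add: k_def algebra_simps)
  have A0: "(k * c / 2) * (2 * \<nu> - 1 - \<alpha>) * R \<le> 0"
  proof -
    have "0 \<le> k * c / 2" using nu0 c_pos by (simp add: k_def)
    moreover have "2 * \<nu> - 1 - \<alpha> \<le> 0" using nu by simp
    ultimately have "(k * c / 2) * (2 * \<nu> - 1 - \<alpha>) \<le> 0" by (simp add: mult_nonneg_nonpos)
    then show ?thesis by (simp add: mult_nonpos_nonneg R_def)
  qed
  have B: "k * (\<nu> - 1) * (1 - 2 * \<nu>) \<le> 3"
  proof -
    have w: "(\<nu> - 1) * (1 - 2 * \<nu>) \<le> 1"
    proof -
      have "(\<nu> - 1) * (1 - 2 * \<nu>) = (1 - \<nu>) * (2 * \<nu> - 1)" by (simp add: algebra_simps)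
      also have "\<dots> \<le> (1 - \<nu>) * 1" using nu1 nu0 by (intro mult_left_mono) auto
      also have "\<dots> \<le> 1" using nu0 by simp
      finally show ?thesis .
    qed
    have k: "0 < k" "k \<le> 3" using nu0 nu1 by (auto simp: k_def)
    show ?thesis
    proof (cases "0 \<le> (\<nu> - 1) * (1 - 2 * \<nu>)")
      case True
      have "k * ((\<nu> - 1) * (1 - 2 * \<nu>)) \<le> 3 * 1"
        using k w True by (intro mult_mono) auto
      then show ?thesis by (simp add: mult.assoc)
    next
      case False
      have "k * ((\<nu> - 1) * (1 - 2 * \<nu>)) \<le> 0"
        using False k mult_nonneg_nonpos[of k "(\<nu> - 1) * (1 - 2 * \<nu>)"] by linarith
      then show ?thesis by (simp add: mult.assoc)
    qed
  qed
  have "k * (\<nu> - 1) * (1 - 2 * \<nu>) * Q \<le> 3 * Q"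
    using B by (intro mult_right_mono) (auto simp: Q_def)
  then show ?thesis unfolding L2 u_def[symmetric] Q_def[symmetric] using A0 by linarith
qed

lemma C4: assumes "0 \<le> t" shows "lam t * (lam t + dbet t - bet t * gam t) + bet t * dlam t + 2 * hxi t = 0"
proof -
  define u where "u = 1 + t"
  have u: "1 \<le> u" using assms by (simp add: u_def)
  define k where "k = 2 * \<nu> + 1"
  define A where "A = u powr (\<nu> - 1)"
  define B where "B = u powr \<nu>"
  define S where "S = u powr (\<nu> - 1 - 1)"
  define Gi where "Gi = 1 / u powr \<alpha>"
  define Q where "Q = u powr (2 * \<nu> - 2)"
  define R where "R = u powr (2 * \<nu> - 1 - \<alpha>)"
  have e1: "A * A = Q" unfolding A_def Q_def by (rule pa) simp
  have e2: "B * S = Q" unfolding B_def S_def Q_def by (rule pa) simp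
  have e3: "A * B * Gi = R" unfolding A_def B_def Gi_def R_def using u by (simp add: pa powr_diff)
  have L: "lam t * (lam t + dbet t - bet t * gam t) + bet t * dlam t + 2 * hxi t
     = k * k * (A * A) + k * \<nu> * (A * A) - k * c * (A * B * Gi) + k * (\<nu> - 1) * (B * S)
       + k * c * R - 4 * k * \<nu> * Q"
    unfolding lam_def dlam_def dbet_def bet_def gam_def hxi_def u_def[symmetric] k_def[symmetric]
      A_def B_def S_def Gi_def Q_def R_def by (simp add: algebra_simps)
  show ?thesis unfolding L e1 e2 e3 by (simp add: k_def algebra_simps)
qed

lemma C5: assumes "T0 \<le> t" shows "(c / 4) * (1 + t) powr (2 * \<nu> - 1 - \<alpha>) \<le> hxi t"
proof -
  define u where "u = 1 + t"
  define k where "k = 2 * \<nu> + 1"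
  define Q where "Q = u powr (2 * \<nu> - 2)"
  define R where "R = u powr (2 * \<nu> - 1 - \<alpha>)"
  define U where "U = u powr (1 - \<alpha>)"
  have e: "Q * U = R" unfolding Q_def U_def R_def by (rule pa) simp
  have Q0: "0 \<le> Q" "0 \<le> R" by (simp_all add: Q_def R_def)
  have K: "8 * \<nu> / c \<le> U" using big[OF assms] Kmax_ge(3) by (simp add: u_def U_def)
  then have "2 * \<nu> \<le> (c / 4) * U" using c_pos by (simp add: field_simps)
  then have "(2 * \<nu>) * Q \<le> ((c / 4) * U) * Q" using Q0(1) by (rule mult_right_mono)
  also have "\<dots> = (c / 4) * (Q * U)" by (simp add: algebra_simps)
  also have "\<dots> = (c / 4) * R" by (simp add: e)
  finally have "(2 * \<nu>) * Q \<le> (c / 4) * R" .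
  then have A: "k * ((2 * \<nu>) * Q) \<le> k * ((c / 4) * R)" using nu0 by (intro mult_left_mono) (auto simp: k_def)
  have H: "hxi t = (k * c / 2) * R - k * (2 * \<nu>) * Q"
    unfolding hxi_def k_def[symmetric] u_def[symmetric] R_def Q_def by (simp add: algebra_simps)
  have "(c / 4) * R \<le> k * ((c / 4) * R)"
    using nu0 c_pos Q0 by (intro mult_right_mono[of 1 k, simplified]) (auto simp: k_def)
  then show ?thesis unfolding u_def[symmetric] R_def[symmetric] H using A by (simp add: algebra_simps)
qed

lemma T0_pos: "0 \<le> t \<Longrightarrow> True" by simp

lemma hxi_nonneg: "T0 \<le> t \<Longrightarrow> 0 \<le> hxi t"
  using C5[of t] c_pos by (smt (verit) powr_ge_zero zero_le_divide_iff mult_nonneg_nonneg)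

lemma E_parts: assumes "T0 \<le> t"
  shows "0 \<le> E t" "(1/2) * (norm (v t))\<^sup>2 \<le> E t" "hxi t * (norm (X t))\<^sup>2 \<le> E t"
proof -
  have a: "0 \<le> b2 t * Fv t" using Fv_nonneg by (simp add: b2_def)
  have b: "0 \<le> (1/2) * (v t \<bullet> v t)" by simp
  have c: "0 \<le> hxi t * (X t \<bullet> X t)" using hxi_nonneg[OF assms] by simp
  show "0 \<le> E t" "(1/2) * (norm (v t))\<^sup>2 \<le> E t" "hxi t * (norm (X t))\<^sup>2 \<le> E t"
    using a b c by (auto simp: E_def power2_norm_eq_inner)
qed

end


context hb
begin

definition "D t = (1 + t) powr (2 * \<nu> - 1) * Fv t + (c / 2) * (1 + t) powr (2 * \<nu> - \<alpha>) * (norm (x' t))\<^sup>2"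
definition "qbd t = - D t + K1 * (1 + t) powr (\<alpha> - 2) * E t"

lemma D_nonneg: "0 \<le> D t"
  unfolding D_def using Fv_nonneg c_pos by (intro add_nonneg_nonneg mult_nonneg_nonneg) auto

lemma cont_D: "0 \<le> a \<Longrightarrow> continuous_on {a..b} D"
  unfolding D_def using cont_Fv cont_x' by (intro continuous_intros) auto

lemma cont_qbd: "0 \<le> a \<Longrightarrow> continuous_on {a..b} qbd"
  unfolding qbd_def using cont_D cont_E by (intro continuous_intros) auto

lemma cont_kE: "0 \<le> a \<Longrightarrow> continuous_on {a..b} kE"
  unfolding kE_def using cont_bet cont_v by (intro continuous_intros) auto

lemma qE_le: assumes T: "T0 \<le> t" shows "qE t \<le> qbd t"
proof -
  have t0: "0 \<le> t" using T T0_ge1 by simp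
  define u where "u = 1 + t"
  have u1: "1 \<le> u" using t0 by (simp add: u_def)
  have b2e: "b2 t = bet t * bet t" unfolding b2_def bet_def by (rule pa[symmetric]) simp
  have conv: "Fv t \<le> X t \<bullet> gradPhi (x t)" using conv_ineq[of "x t"] by (simp add: Fv_def X_def)
  have lb: "0 \<le> lam t * bet t" using t0 nu0 by (simp add: lam_def bet_def)
  have step1: "qE t \<le> (db2 t - lam t * bet t) * Fv t + bet t * (lam t + dbet t - bet t * gam t) * (x' t \<bullet> x' t)
        + (lam t * dlam t + dhxi t) * (X t \<bullet> X t)
        + (lam t * (lam t + dbet t - bet t * gam t) + bet t * dlam t + 2 * hxi t) * (X t \<bullet> x' t)"
    unfolding qE_def vd_def v_def W_def by (rule qE_alg[OF b2e conv lb])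
  have i1: "(db2 t - lam t * bet t) * Fv t = - ((1 + t) powr (2 * \<nu> - 1) * Fv t)" using Co1[OF t0] by simp
  have i2: "bet t * (lam t + dbet t - bet t * gam t) * (x' t \<bullet> x' t) \<le> - (c / 2) * (1 + t) powr (2 * \<nu> - \<alpha>) * (norm (x' t))\<^sup>2"
  proof -
    have "bet t * (lam t + dbet t - bet t * gam t) * (x' t \<bullet> x' t) \<le> (- (c / 2) * (1 + t) powr (2 * \<nu> - \<alpha>)) * (x' t \<bullet> x' t)"
      by (rule mult_right_mono[OF C2[OF T]]) simp
    then show ?thesis by (simp add: power2_norm_eq_inner)
  qed
  have i3: "(lam t * dlam t + dhxi t) * (X t \<bullet> X t) \<le> K1 * (1 + t) powr (\<alpha> - 2) * E t"
  proof -
    have "(lam t * dlam t + dhxi t) * (X t \<bullet> X t) \<le> 3 * (1 + t) powr (2 * \<nu> - 3) * (X t \<bullet> X t)"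
      using C3[OF t0] by (simp add: mult_right_mono)
    also have "3 * (1 + t) powr (2 * \<nu> - 3) = K1 * (1 + t) powr (\<alpha> - 2) * ((c / 4) * (1 + t) powr (2 * \<nu> - 1 - \<alpha>))"
    proof -
      have "(1 + t) powr (\<alpha> - 2) * (1 + t) powr (2 * \<nu> - 1 - \<alpha>) = (1 + t) powr (2 * \<nu> - 3)" by (rule pa) simp
      then show ?thesis using c_pos by (simp add: K1_def field_simps)
    qed
    also have "K1 * (1 + t) powr (\<alpha> - 2) * ((c / 4) * (1 + t) powr (2 * \<nu> - 1 - \<alpha>)) * (X t \<bullet> X t)
        \<le> K1 * (1 + t) powr (\<alpha> - 2) * hxi t * (X t \<bullet> X t)"
      using C5[OF T] c_pos by (intro mult_right_mono mult_left_mono) (auto simp: K1_def)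
    also have "\<dots> \<le> K1 * (1 + t) powr (\<alpha> - 2) * E t"
    proof -
      have "hxi t * (X t \<bullet> X t) \<le> E t" using E_parts(3)[OF T] by (simp add: power2_norm_eq_inner)
      moreover have "0 \<le> K1 * (1 + t) powr (\<alpha> - 2)" using c_pos by (simp add: K1_def)
      ultimately have "K1 * (1 + t) powr (\<alpha> - 2) * (hxi t * (X t \<bullet> X t)) \<le> K1 * (1 + t) powr (\<alpha> - 2) * E t"
        by (rule mult_left_mono)
      then show ?thesis by (simp add: mult.assoc)
    qed
    finally show ?thesis .
  qed
  have i4: "lam t * (lam t + dbet t - bet t * gam t) + bet t * dlam t + 2 * hxi t = 0" by (rule C4[OF t0])
  show ?thesis using step1 i1 i2 i3 i4 unfolding qbd_def D_def by simp
qed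

lemma lub_E: assumes "T0 \<le> a" shows "lub g E qbd kE a b"
proof (rule lub_mono[OF rd_lub[OF rd_E]])
  show "0 \<le> a" using assms T0_ge1 by simp
  show "qE t \<le> qbd t" if "t \<in> {a..b}" for t using qE_le that assms by auto
  show "kE t \<le> kE t" for t by simp
  show "(\<lambda>\<tau>. norm (g \<tau>)) integrable_on {a..b}" using ng assms T0_ge1 by simp
qed

end


context hb
begin

definition "Bg = integral {0..} (\<lambda>t. (1 + t) powr \<nu> * norm (g t))"

lemma gw_sub: "0 \<le> a \<Longrightarrow> (\<lambda>t. (1 + t) powr \<nu> * norm (g t)) integrable_on {a..b}"
  by (rule integrable_on_subinterval[OF g_weighted]) auto

lemma Bg_ge: assumes "0 \<le> a" shows "integral {a..b} (\<lambda>t. (1 + t) powr \<nu> * norm (g t)) \<le> Bg"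
  unfolding Bg_def using assms
  by (intro integral_subset_le gw_sub g_weighted) auto

lemma Bg_nonneg: "0 \<le> Bg"
  unfolding Bg_def by (intro integral_nonneg g_weighted) auto

lemma int_pow_bound: assumes "0 \<le> a" "a \<le> b"
  shows "integral {a..b} (\<lambda>s. (1 + s) powr (\<alpha> - 2)) \<le> (1 + a) powr (\<alpha> - 1) / (1 - \<alpha>)"
proof -
  have "((\<lambda>s. (1 + s) powr (\<alpha> - 2)) has_integral
      ((1 + b) powr (\<alpha> - 1) / (\<alpha> - 1) - (1 + a) powr (\<alpha> - 1) / (\<alpha> - 1))) {a..b}"
  proof (rule fundamental_theorem_of_calculus[OF assms(2)])
    fix s assume s: "s \<in> {a..b}"
    then have pos: "0 < 1 + s" using assms by simp
    have "((\<lambda>s. (1 + s) powr (\<alpha> - 1) / (\<alpha> - 1)) has_real_derivative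
        ((\<alpha> - 1) * (1 + s) powr (\<alpha> - 1 - 1) * 1 / (\<alpha> - 1))) (at s within {a..b})"
      using pos by (auto intro!: derivative_eq_intros)
    moreover have "(\<alpha> - 1) * (1 + s) powr (\<alpha> - 1 - 1) * 1 / (\<alpha> - 1) = (1 + s) powr (\<alpha> - 2)"
      using alpha by simp
    ultimately show "((\<lambda>s. (1 + s) powr (\<alpha> - 1) / (\<alpha> - 1)) has_vector_derivative (1 + s) powr (\<alpha> - 2)) (at s within {a..b})"
      by (simp add: has_real_derivative_iff_has_vector_derivative)
  qed
  then have I: "integral {a..b} (\<lambda>s. (1 + s) powr (\<alpha> - 2)) = (1 + b) powr (\<alpha> - 1) / (\<alpha> - 1) - (1 + a) powr (\<alpha> - 1) / (\<alpha> - 1)"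
    by (rule integral_unique)
  have "P / (\<alpha> - 1) - Q / (\<alpha> - 1) = (Q - P) / (1 - \<alpha>)" for P Q :: real
  proof -
    have "P / (\<alpha> - 1) - Q / (\<alpha> - 1) = (P - Q) / (\<alpha> - 1)" by (simp add: diff_divide_distrib)
    also have "\<dots> = (Q - P) / (1 - \<alpha>)" by (metis minus_diff_eq minus_divide_divide)
    finally show ?thesis .
  qed
  then have "integral {a..b} (\<lambda>s. (1 + s) powr (\<alpha> - 2)) = ((1 + a) powr (\<alpha> - 1) - (1 + b) powr (\<alpha> - 1)) / (1 - \<alpha>)"
    unfolding I by blast
  also have "\<dots> \<le> (1 + a) powr (\<alpha> - 1) / (1 - \<alpha>)"
    using alpha by (intro divide_right_mono) auto
  finally show ?thesis .
qed

lemma K1_small: "K1 * ((1 + T0) powr (\<alpha> - 1) / (1 - \<alpha>)) \<le> 1 / 2"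
proof -
  have K: "24 / (c * (1 - \<alpha>)) \<le> (1 + T0) powr (1 - \<alpha>)"
    using big[of T0] Kmax_ge(4) by simp
  have p: "(1 + T0) powr (\<alpha> - 1) = 1 / (1 + T0) powr (1 - \<alpha>)"
    using T0_ge1 by (simp add: powr_minus_divide[symmetric] powr_minus)
  have pos: "0 < (1 + T0) powr (1 - \<alpha>)" using T0_ge1 by simp
  have "K1 * ((1 + T0) powr (\<alpha> - 1) / (1 - \<alpha>)) = 12 / (c * (1 - \<alpha>) * (1 + T0) powr (1 - \<alpha>))"
    unfolding p K1_def by (simp add: field_simps)
  also have "\<dots> \<le> 12 / (c * (1 - \<alpha>) * (24 / (c * (1 - \<alpha>))))"
    using K c_pos alpha pos by (intro divide_left_mono mult_left_mono mult_pos_pos) auto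
  also have "\<dots> = 1 / 2" using c_pos alpha by (simp add: field_simps)
  finally show ?thesis .
qed

lemma int_bound:
  assumes s: "T0 \<le> s" and M0: "0 \<le> M" and EM: "\<And>\<tau>. \<tau> \<in> {T0..s} \<Longrightarrow> E \<tau> \<le> M"
  shows "E s + integral {T0..s} D \<le> E T0 + M / 2 + sqrt (2 * M) * Bg"
proof -
  have T00: "0 \<le> T0" using T0_ge1 by simp
  have L: "E s - E T0 \<le> integral {T0..s} qbd + integral {T0..s} (\<lambda>\<tau>. kE \<tau> * norm (g \<tau>))"
    by (rule lub_integrate[OF lub_E[OF order_refl] s cont_qbd[OF T00] cont_kE[OF T00] ng[OF T00]])
  define P where "P \<tau> = K1 * (1 + \<tau>) powr (\<alpha> - 2) * E \<tau>" for \<tau>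
  have cP: "continuous_on {T0..s} P" unfolding P_def using cont_E[OF T00] T00 by (intro continuous_intros) auto
  have iD: "D integrable_on {T0..s}" by (rule integrable_continuous_real[OF cont_D[OF T00]])
  have iP: "P integrable_on {T0..s}" by (rule integrable_continuous_real[OF cP])
  have q: "integral {T0..s} qbd = - integral {T0..s} D + integral {T0..s} P"
  proof -
    have "qbd = (\<lambda>\<tau>. - D \<tau> + P \<tau>)" by (rule ext) (simp add: qbd_def P_def)
    then have "integral {T0..s} qbd = integral {T0..s} (\<lambda>\<tau>. - D \<tau> + P \<tau>)" by simp
    also have "\<dots> = integral {T0..s} (\<lambda>\<tau>. - D \<tau>) + integral {T0..s} P"
      by (rule integral_add) (use iD iP integrable_neg in auto)
    finally show ?thesis by (simp add: integral_neg)
  qed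
  have iu: "(\<lambda>\<tau>. (1 + \<tau>) powr (\<alpha> - 2)) integrable_on {T0..s}"
    using T00 by (intro integrable_continuous_real continuous_intros) auto
  have P1: "integral {T0..s} P \<le> integral {T0..s} (\<lambda>\<tau>. (K1 * M) * (1 + \<tau>) powr (\<alpha> - 2))"
  proof (rule integral_le[OF iP])
    show "(\<lambda>\<tau>. (K1 * M) * (1 + \<tau>) powr (\<alpha> - 2)) integrable_on {T0..s}"
      using integrable_cmul[OF iu, of "K1 * M"] by simp
    fix \<tau> assume "\<tau> \<in> {T0..s}"
    then have "E \<tau> \<le> M" by (rule EM)
    moreover have "0 \<le> K1 * (1 + \<tau>) powr (\<alpha> - 2)" using c_pos by (simp add: K1_def)
    ultimately have "K1 * (1 + \<tau>) powr (\<alpha> - 2) * E \<tau> \<le> K1 * (1 + \<tau>) powr (\<alpha> - 2) * M"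
      by (rule mult_left_mono)
    then show "P \<tau> \<le> (K1 * M) * (1 + \<tau>) powr (\<alpha> - 2)" by (simp add: P_def algebra_simps)
  qed
  also have "\<dots> = (K1 * M) * integral {T0..s} (\<lambda>\<tau>. (1 + \<tau>) powr (\<alpha> - 2))" by simp
  also have "\<dots> \<le> (K1 * M) * ((1 + T0) powr (\<alpha> - 1) / (1 - \<alpha>))"
    using int_pow_bound[OF T00 s] M0 c_pos by (intro mult_left_mono) (auto simp: K1_def)
  also have "\<dots> = M * (K1 * ((1 + T0) powr (\<alpha> - 1) / (1 - \<alpha>)))" by simp
  also have "\<dots> \<le> M * (1 / 2)" using K1_small M0 by (rule mult_left_mono)
  finally have P2: "integral {T0..s} P \<le> M / 2" by simp
  have ikg: "(\<lambda>\<tau>. kE \<tau> * norm (g \<tau>)) integrable_on {T0..s}"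
    by (rule kg_integrable[OF cont_kE[OF T00] ng[OF T00]])
  have G: "integral {T0..s} (\<lambda>\<tau>. kE \<tau> * norm (g \<tau>)) \<le> sqrt (2 * M) * Bg"
  proof -
    have "integral {T0..s} (\<lambda>\<tau>. kE \<tau> * norm (g \<tau>))
        \<le> integral {T0..s} (\<lambda>\<tau>. sqrt (2 * M) * ((1 + \<tau>) powr \<nu> * norm (g \<tau>)))"
    proof (rule integral_le[OF ikg])
      show "(\<lambda>\<tau>. sqrt (2 * M) * ((1 + \<tau>) powr \<nu> * norm (g \<tau>))) integrable_on {T0..s}"
        using integrable_cmul[OF gw_sub[OF T00, of s], of "sqrt (2 * M)"] by simp
      fix \<tau> assume \<tau>: "\<tau> \<in> {T0..s}"
      have "(1/2) * (norm (v \<tau>))\<^sup>2 \<le> M" using E_parts(2)[of \<tau>] EM[OF \<tau>] \<tau> by force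
      then have "(norm (v \<tau>))\<^sup>2 \<le> 2 * M" by simp
      then have nv: "norm (v \<tau>) \<le> sqrt (2 * M)" using real_le_rsqrt by blast
      have "kE \<tau> * norm (g \<tau>) = (1 + \<tau>) powr \<nu> * norm (v \<tau>) * norm (g \<tau>)" by (simp add: kE_def bet_def)
      also have "\<dots> \<le> (1 + \<tau>) powr \<nu> * sqrt (2 * M) * norm (g \<tau>)"
        using nv by (intro mult_right_mono mult_left_mono) auto
      finally show "kE \<tau> * norm (g \<tau>) \<le> sqrt (2 * M) * ((1 + \<tau>) powr \<nu> * norm (g \<tau>))" by (simp add: algebra_simps)
    qed
    also have "\<dots> = sqrt (2 * M) * integral {T0..s} (\<lambda>\<tau>. (1 + \<tau>) powr \<nu> * norm (g \<tau>))" by simp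
    also have "\<dots> \<le> sqrt (2 * M) * Bg" using Bg_ge[OF T00] M0 by (intro mult_left_mono) auto
    finally show ?thesis .
  qed
  show ?thesis using L q P2 G by linarith
qed

end


lemma sq_bound:
  fixes M E0 B :: real
  assumes M0: "0 \<le> M" and E0: "0 \<le> E0" and B0: "0 \<le> B"
    and h: "M \<le> E0 + M / 2 + sqrt (2 * M) * B"
  shows "M \<le> (2 * sqrt 2 * B + sqrt (2 * E0))\<^sup>2"
proof -
  define m where "m = sqrt M"
  define a where "a = 2 * E0"
  define bb where "bb = 2 * sqrt 2 * B"
  have m0: "0 \<le> m" and mM: "m * m = M" using M0 by (auto simp: m_def)
  have s2: "sqrt (2 * M) = sqrt 2 * m" by (simp add: m_def real_sqrt_mult)
  have h2: "M \<le> E0 + M / 2 + sqrt 2 * m * B" using h by (simp add: s2)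
  then have h3: "M \<le> 2 * E0 + 2 * (sqrt 2 * m * B)" by linarith
  have e: "bb * m = 2 * (sqrt 2 * m * B)" by (simp add: bb_def)
  have hm: "m * m \<le> a + bb * m" unfolding e mM a_def using h3 by linarith
  have a0: "0 \<le> a" and bb0: "0 \<le> bb" using E0 B0 by (auto simp: a_def bb_def)
  have "m \<le> bb + sqrt a"
  proof (rule ccontr)
    assume "\<not> m \<le> bb + sqrt a"
    then have lt: "bb + sqrt a < m" by simp
    have sa: "sqrt a \<le> m" using lt bb0 by simp
    have "(bb + sqrt a) * m < m * m" using lt m0 sa
      by (metis mult_strict_right_mono order_le_less_trans real_sqrt_ge_zero a0 add_nonneg_nonneg bb0 less_eq_real_def)
    moreover have "sqrt a * sqrt a \<le> sqrt a * m" using sa a0 by (intro mult_left_mono) auto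
    moreover have "sqrt a * sqrt a = a" using a0 by simp
    ultimately show False using hm by (simp add: algebra_simps)
  qed
  then have "m * m \<le> (bb + sqrt a) * (bb + sqrt a)" using m0 by (intro mult_mono) auto
  then show ?thesis unfolding mM a_def bb_def by (simp add: power2_eq_square)
qed

context hb
begin

definition "Mb = (2 * sqrt 2 * Bg + sqrt (2 * E T0))\<^sup>2"
definition "DB = E T0 + Mb / 2 + sqrt (2 * Mb) * Bg"

lemma T00: "0 \<le> T0" using T0_ge1 by simp

lemma intD_nonneg: "0 \<le> a \<Longrightarrow> 0 \<le> integral {a..b} D"
  by (intro integral_nonneg integrable_continuous_real cont_D D_nonneg) auto

lemma E_le_Mb: assumes t: "T0 \<le> t" shows "E t \<le> Mb"
proof -
  obtain tm where tm: "tm \<in> {T0..t}" and mx: "\<forall>y\<in>{T0..t}. E y \<le> E tm"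
    using continuous_attains_sup[of "{T0..t}" E] cont_E[OF T00] t by auto
  define M where "M = E tm"
  have M0: "0 \<le> M" using E_parts(1)[of tm] tm by (simp add: M_def)
  have "E tm + integral {T0..tm} D \<le> E T0 + M / 2 + sqrt (2 * M) * Bg"
    by (rule int_bound) (use tm mx M0 in \<open>auto simp: M_def\<close>)
  moreover have "0 \<le> integral {T0..tm} D" using intD_nonneg[OF T00] .
  ultimately have "M \<le> E T0 + M / 2 + sqrt (2 * M) * Bg" by (simp add: M_def)
  then have "M \<le> Mb" unfolding Mb_def
    by (rule sq_bound[OF M0 E_parts(1)[OF order_refl] Bg_nonneg])
  moreover have "E t \<le> E tm" using mx t by auto
  ultimately show ?thesis by (simp add: M_def)
qed

lemma Mb_nonneg: "0 \<le> Mb" by (simp add: Mb_def)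

lemma intD_le: assumes t: "T0 \<le> t" shows "integral {T0..t} D \<le> DB"
proof -
  have "E t + integral {T0..t} D \<le> E T0 + Mb / 2 + sqrt (2 * Mb) * Bg"
    by (rule int_bound[OF t Mb_nonneg]) (use E_le_Mb in auto)
  then show ?thesis using E_parts(1)[OF t] by (simp add: DB_def)
qed

definition "FB t = (1 + t) powr (2 * \<nu> - \<alpha>) * (norm (x' t))\<^sup>2"

lemma FB_nonneg: "0 \<le> FB t" by (simp add: FB_def)

lemma cont_FB: "0 \<le> a \<Longrightarrow> continuous_on {a..b} FB"
  unfolding FB_def using cont_x' by (intro continuous_intros) auto

lemma FB_le_D: "0 \<le> t \<Longrightarrow> FB t \<le> (2 / c) * D t"
  unfolding FB_def D_def using c_pos Fv_nonneg by (simp add: algebra_simps)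

lemma intFB_bound: assumes k: "0 \<le> k"
  shows "integral {0..k} FB \<le> integral {0..T0} FB + (2 / c) * DB"
proof (cases "k \<le> T0")
  case True
  have "integral {0..k} FB \<le> integral {0..T0} FB"
    using True k by (intro integral_subset_le integrable_continuous_real cont_FB) (auto simp: FB_nonneg)
  moreover have "0 \<le> DB"
  proof -
    have "0 \<le> integral {T0..T0} D" by simp
    then show ?thesis using intD_le[OF order_refl] by linarith
  qed
  ultimately show ?thesis using c_pos by (simp add: add_increasing2)
next
  case False
  have i: "FB integrable_on {0..k}" using k by (intro integrable_continuous_real cont_FB) auto
  have "integral {0..k} FB = integral {0..T0} FB + integral {T0..k} FB"
    using Henstock_Kurzweil_Integration.integral_combine[of 0 T0 k FB] i False T00 by simp
  also have "integral {T0..k} FB \<le> integral {T0..k} (\<lambda>t. (2 / c) * D t)"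
    using False T00 FB_le_D by (intro integral_le integrable_continuous_real cont_FB continuous_intros cont_D) auto
  also have "\<dots> = (2 / c) * integral {T0..k} D" by simp
  also have "\<dots> \<le> (2 / c) * DB" using intD_le[of k] False c_pos by (intro mult_left_mono) auto
  finally show ?thesis by simp
qed

lemma partB: "FB integrable_on {0..}"
proof -
  define f where "f n t = (if t \<in> {..real n} then FB t else 0)" for n :: nat and t
  have set_eq: "{..real n} \<inter> {0..} = {0..real n}" for n by auto
  have fi: "f n integrable_on {0..}" for n
    unfolding f_def integrable_restrict_Int set_eq by (intro integrable_continuous_real cont_FB) auto
  have fint: "integral {0..} (f n) = integral {0..real n} FB" for n
    unfolding f_def integral_restrict_Int set_eq ..
  have "FB integrable_on {0..} \<and> ((\<lambda>k. integral {0..} (f k)) \<longlongrightarrow> integral {0..} FB) sequentially"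
  proof (rule monotone_convergence_increasing[OF fi])
    show "f k t \<le> f (Suc k) t" if "t \<in> {0..}" for k t
      using FB_nonneg by (auto simp: f_def)
    show "((\<lambda>k. f k t) \<longlongrightarrow> FB t) sequentially" if "t \<in> {0..}" for t
    proof (rule tendsto_eventually)
      obtain N :: nat where "t \<le> real N" using real_arch_simple by blast
      then show "\<forall>\<^sub>F k in sequentially. f k t = FB t"
        by (intro eventually_sequentiallyI[of N]) (auto simp: f_def)
    qed
    show "bounded (range (\<lambda>k. integral {0..} (f k)))"
      unfolding bounded_iff
    proof (intro exI ballI)
      fix y assume "y \<in> range (\<lambda>k. integral {0..} (f k))"
      then obtain n where y: "y = integral {0..real n} FB" using fint by auto
      have "0 \<le> integral {0..real n} FB" by (intro integral_nonneg integrable_continuous_real cont_FB FB_nonneg) auto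
      then show "norm y \<le> integral {0..T0} FB + (2 / c) * DB" using intFB_bound[of "real n"] y by simp
    qed
  qed
  then show ?thesis by blast
qed

end


lemma qU_alg:
  fixes Y Gr :: "'a::real_inner" and F b2 b2' bet bet' gam :: real
  assumes b2: "b2 = bet * bet"
  shows "(b2' * F + b2 * (Gr \<bullet> Y)) +
      (0 * ((bet *\<^sub>R Y) \<bullet> (bet *\<^sub>R Y)) +
       (1/2) * ((bet' *\<^sub>R Y + bet *\<^sub>R (- gam *\<^sub>R Y - Gr)) \<bullet> (bet *\<^sub>R Y)
              + (bet *\<^sub>R Y) \<bullet> (bet' *\<^sub>R Y + bet *\<^sub>R (- gam *\<^sub>R Y - Gr))))
    = b2' * F + (bet' * bet - bet * bet * gam) * (Y \<bullet> Y)"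
  unfolding b2
  by (simp add: inner_add_left inner_add_right inner_diff_left inner_diff_right
        inner_commute[of Gr Y] algebra_simps)

context hb
begin

definition "Y t = bet t *\<^sub>R x' t"
definition "Yd t = dbet t *\<^sub>R x' t + bet t *\<^sub>R W t"
definition "Wf t = (1/2) * (norm (x' t))\<^sup>2 + Fv t"
definition "U t = (1 + t) powr (2 * \<nu>) * Wf t"
definition "qU t = (db2 t * Fv t + b2 t * (gradPhi (x t) \<bullet> x' t))
    + (0 * (Y t \<bullet> Y t) + (1/2) * (Yd t \<bullet> Y t + Y t \<bullet> Yd t))"
definition "KU = 2 * \<nu> + 2 * \<nu> / c"
definition "KD = 1 + 1 / c"
definition "Cv = sqrt (2 * Mb) + sqrt (36 * Mb / c)"

lemma U_nonneg: "0 \<le> U t" unfolding U_def Wf_def using Fv_nonneg by simp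

lemma cont_Y: "0 \<le> a \<Longrightarrow> continuous_on {a..b} Y"
  unfolding Y_def using cont_bet cont_x' by (intro continuous_intros) auto
lemma cont_Yd: "0 \<le> a \<Longrightarrow> continuous_on {a..b} Yd"
  unfolding Yd_def using cont_dbet cont_bet cont_x' cont_W by (intro continuous_intros) auto
lemma cont_U: "0 \<le> a \<Longrightarrow> continuous_on {a..b} U"
  unfolding U_def Wf_def using cont_x' cont_Fv by (intro continuous_intros) auto

lemma b2_bet: "b2 t = bet t * bet t" unfolding b2_def bet_def by (rule pa[symmetric]) simp

lemma rd_Y: assumes a: "0 \<le> a" shows "rd g Y Yd bet a b"
proof -
  have r2: "rd g (\<lambda>t. bet t *\<^sub>R x' t) (\<lambda>t. dbet t *\<^sub>R x' t + bet t *\<^sub>R W t) (\<lambda>t. 0 * norm (x' t) + norm (bet t) * 1) a b"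
    by (rule rd_bilinear[OF bounded_bilinear_scaleR Pn_scaleR rd_bet[OF a] rd_x'[OF a]
          cont_dbet[OF a] continuous_on_const cont_bet[OF a] cont_x'[OF a] ng[OF a]])
  have absb: "\<bar>bet t\<bar> = bet t" if "t \<in> {a..b}" for t
    using a bet_pos[of t] that by simp
  show ?thesis by (rule rd_cong[OF r2]) (auto simp: Y_def Yd_def absb)
qed

lemma rd_U: assumes a: "0 \<le> a" shows "rd g U qU (\<lambda>t. bet t * norm (Y t)) a b"
proof -
  have rvv: "rd g (\<lambda>t. Y t \<bullet> Y t) (\<lambda>t. Yd t \<bullet> Y t + Y t \<bullet> Yd t) (\<lambda>t. bet t * norm (Y t) + norm (Y t) * bet t) a b"
    by (rule rd_bilinear[OF bounded_bilinear_inner Pn_inner rd_Y[OF a] rd_Y[OF a]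
          cont_Yd[OF a] cont_bet[OF a] cont_Y[OF a] cont_Y[OF a] ng[OF a]])
  have rK: "rd g (\<lambda>t. (1/2) * (Y t \<bullet> Y t)) (\<lambda>t. 0 * (Y t \<bullet> Y t) + (1/2) * (Yd t \<bullet> Y t + Y t \<bullet> Yd t))
      (\<lambda>t. 0 * norm (Y t \<bullet> Y t) + norm (1/2::real) * (bet t * norm (Y t) + norm (Y t) * bet t)) a b"
    by (rule rd_bilinear[OF bounded_bilinear_mult Pn_mult rd_const[OF ng[OF a]] rvv
          continuous_on_const continuous_on_const continuous_on_const _ ng[OF a]])
       (use cont_Y[OF a] in \<open>intro continuous_intros\<close>)
  have rA: "rd g (\<lambda>t. b2 t * Fv t) (\<lambda>t. db2 t * Fv t + b2 t * (gradPhi (x t) \<bullet> x' t))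
      (\<lambda>t. 0 * norm (Fv t) + norm (b2 t) * 0) a b"
    by (rule rd_bilinear[OF bounded_bilinear_mult Pn_mult rd_b2[OF a] rd_F[OF a, folded Fv_def[abs_def]]
          cont_db2[OF a] continuous_on_const cont_b2[OF a] cont_Fv[OF a] ng[OF a]])
  have Ueq: "U t = b2 t * Fv t + (1/2) * (Y t \<bullet> Y t)" for t
  proof -
    have pw: "(1 + t) powr (2 * \<nu>) = bet t * bet t" using b2_bet[of t] by (simp add: b2_def)
    show ?thesis unfolding U_def Wf_def Y_def b2_bet pw
      by (simp add: power2_norm_eq_inner algebra_simps)
  qed
  show ?thesis
    by (rule rd_cong[OF rd_add[OF rA rK]]) (auto simp: Ueq qU_def)
qed

lemma qU_le: assumes t: "0 \<le> t" shows "qU t \<le> KU * D t"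
proof -
  have eq: "qU t = db2 t * Fv t + (dbet t * bet t - bet t * bet t * gam t) * (x' t \<bullet> x' t)"
    unfolding qU_def Y_def Yd_def W_def by (rule qU_alg[OF b2_bet])
  define u where "u = 1 + t"
  have u1: "1 \<le> u" using t by (simp add: u_def)
  have db: "dbet t * bet t = \<nu> * u powr (2 * \<nu> - 1)"
  proof -
    have "u powr (\<nu> - 1) * u powr \<nu> = u powr (2 * \<nu> - 1)" by (rule pa) simp
    then show ?thesis unfolding dbet_def bet_def u_def[symmetric] by (simp add: algebra_simps)
  qed
  have gam0: "0 \<le> bet t * bet t * gam t" using c_pos by (simp add: bet_def gam_def)
  have xx: "0 \<le> x' t \<bullet> x' t" by simp
  have mono: "u powr (2 * \<nu> - 1) \<le> u powr (2 * \<nu> - \<alpha>)"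
    using u1 alpha by (intro powr_mono) auto
  have "qU t \<le> db2 t * Fv t + (\<nu> * u powr (2 * \<nu> - 1)) * (x' t \<bullet> x' t)"
    unfolding eq db using gam0 xx by (intro add_left_mono mult_right_mono) auto
  also have "\<dots> \<le> db2 t * Fv t + (\<nu> * u powr (2 * \<nu> - \<alpha>)) * (x' t \<bullet> x' t)"
    using mono nu0 xx by (intro add_left_mono mult_right_mono mult_left_mono) auto
  also have "\<dots> \<le> KU * D t"
  proof -
    have KU1: "2 * \<nu> \<le> KU" using nu0 c_pos by (simp add: KU_def)
    have KU2: "\<nu> \<le> KU * (c / 2)" using nu0 c_pos by (simp add: KU_def field_simps)
    have a1: "db2 t * Fv t \<le> KU * (u powr (2 * \<nu> - 1) * Fv t)"
      unfolding db2_def u_def[symmetric] using KU1 Fv_nonneg[of t]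
      by (simp add: mult.assoc[symmetric] mult_right_mono)
    have a2: "(\<nu> * u powr (2 * \<nu> - \<alpha>)) * (x' t \<bullet> x' t) \<le> KU * ((c / 2) * u powr (2 * \<nu> - \<alpha>) * (x' t \<bullet> x' t))"
    proof -
      have pq: "0 \<le> u powr (2 * \<nu> - \<alpha>) * (x' t \<bullet> x' t)" using xx by simp
      have "\<nu> * (u powr (2 * \<nu> - \<alpha>) * (x' t \<bullet> x' t)) \<le> (KU * (c / 2)) * (u powr (2 * \<nu> - \<alpha>) * (x' t \<bullet> x' t))"
        by (rule mult_right_mono[OF KU2 pq])
      then show ?thesis by (simp add: algebra_simps)
    qed
    show ?thesis using a1 a2 unfolding D_def u_def[symmetric] by (simp add: power2_norm_eq_inner algebra_simps)
  qed
  finally show ?thesis .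
qed

lemma Y_bound: assumes t: "T0 \<le> t" shows "norm (Y t) \<le> Cv"
proof -
  have t0: "0 \<le> t" using t T00 by simp
  have Yeq: "Y t = v t - lam t *\<^sub>R X t" by (simp add: Y_def v_def)
  have nv: "norm (v t) \<le> sqrt (2 * Mb)"
  proof -
    have "(1/2) * (norm (v t))\<^sup>2 \<le> Mb" using E_parts(2)[OF t] E_le_Mb[OF t] by linarith
    then have "(norm (v t))\<^sup>2 \<le> 2 * Mb" by simp
    then show ?thesis using real_le_rsqrt by blast
  qed
  have nl: "norm (lam t *\<^sub>R X t) \<le> sqrt (36 * Mb / c)"
  proof -
    define u where "u = 1 + t"
    have u1: "1 \<le> u" using t0 by (simp add: u_def)
    have l2: "lam t * lam t = (2 * \<nu> + 1) * (2 * \<nu> + 1) * u powr (2 * \<nu> - 2)"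
    proof -
      have "u powr (\<nu> - 1) * u powr (\<nu> - 1) = u powr (2 * \<nu> - 2)" by (rule pa) simp
      then show ?thesis unfolding lam_def u_def[symmetric] by (simp add: algebra_simps)
    qed
    have k9: "(2 * \<nu> + 1) * (2 * \<nu> + 1) \<le> 3 * 3" using nu0 nu1 by (intro mult_mono) auto
    have pm: "u powr (2 * \<nu> - 2) \<le> u powr (2 * \<nu> - 1 - \<alpha>)" using u1 alpha by (intro powr_mono) auto
    have "lam t * lam t \<le> 9 * u powr (2 * \<nu> - 2)" unfolding l2 using k9 by (intro mult_right_mono) auto
    also have "\<dots> \<le> 9 * u powr (2 * \<nu> - 1 - \<alpha>)" using pm by simp
    also have "\<dots> = (36 / c) * ((c / 4) * u powr (2 * \<nu> - 1 - \<alpha>))" using c_pos by simp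
    also have "\<dots> \<le> (36 / c) * hxi t" using C5[OF t] c_pos by (intro mult_left_mono) (auto simp: u_def)
    finally have L: "lam t * lam t \<le> (36 / c) * hxi t" .
    have "(norm (lam t *\<^sub>R X t))\<^sup>2 = (lam t * lam t) * (norm (X t))\<^sup>2" by (simp add: power2_eq_square)
    also have "\<dots> \<le> ((36 / c) * hxi t) * (norm (X t))\<^sup>2" using L by (intro mult_right_mono) auto
    also have "\<dots> = (36 / c) * (hxi t * (norm (X t))\<^sup>2)" by simp
    also have "\<dots> \<le> (36 / c) * Mb"
      using E_parts(3)[OF t] E_le_Mb[OF t] c_pos by (intro mult_left_mono) auto
    finally have "(norm (lam t *\<^sub>R X t))\<^sup>2 \<le> 36 * Mb / c" by simp
    then show ?thesis using real_le_rsqrt by blast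
  qed
  have "norm (Y t) \<le> norm (v t) + norm (lam t *\<^sub>R X t)" unfolding Yeq by (rule norm_triangle_ineq4)
  then show ?thesis using nv nl by (simp add: Cv_def)
qed

lemma Cv_nonneg: "0 \<le> Cv" using Mb_nonneg c_pos by (simp add: Cv_def)

lemma U_int: assumes a: "T0 \<le> a" and ab: "a \<le> b"
  shows "U b - U a \<le> KU * integral {a..b} D + Cv * integral {a..b} (\<lambda>\<tau>. (1 + \<tau>) powr \<nu> * norm (g \<tau>))"
proof -
  have a0: "0 \<le> a" using a T00 by simp
  have L: "lub g U (\<lambda>t. KU * D t) (\<lambda>t. Cv * (1 + t) powr \<nu>) a b"
  proof (rule lub_mono[OF rd_lub[OF rd_U[OF a0]] _ _ ng[OF a0]])
    fix t assume "t \<in> {a..b}"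
    then have "0 \<le> t" "T0 \<le> t" using a0 a by auto
    then show "qU t \<le> KU * D t" "bet t * norm (Y t) \<le> Cv * (1 + t) powr \<nu>"
      using qU_le Y_bound by (auto simp: bet_def mult.commute intro: mult_left_mono)
  qed
  have "U b - U a \<le> integral {a..b} (\<lambda>t. KU * D t) + integral {a..b} (\<lambda>\<tau>. Cv * (1 + \<tau>) powr \<nu> * norm (g \<tau>))"
    by (rule lub_integrate[OF L ab _ _ ng[OF a0]]) (use a0 cont_D in \<open>intro continuous_intros; auto\<close>)+
  also have "integral {a..b} (\<lambda>\<tau>. Cv * (1 + \<tau>) powr \<nu> * norm (g \<tau>)) = Cv * integral {a..b} (\<lambda>\<tau>. (1 + \<tau>) powr \<nu> * norm (g \<tau>))"
    by (simp add: mult.assoc)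
  finally show ?thesis by simp
qed

lemma U_over: assumes t: "0 \<le> t" shows "U t / (1 + t) \<le> KD * D t"
proof -
  define u where "u = 1 + t"
  have u1: "1 \<le> u" using t by (simp add: u_def)
  have e: "u powr (2 * \<nu>) / u = u powr (2 * \<nu> - 1)" using u1 by (simp add: powr_diff)
  have pm: "u powr (2 * \<nu> - 1) \<le> u powr (2 * \<nu> - \<alpha>)" using u1 alpha by (intro powr_mono) auto
  have "U t / (1 + t) = (u powr (2 * \<nu>) / u) * Wf t"
    unfolding U_def u_def[symmetric] by simp
  also have "\<dots> = u powr (2 * \<nu> - 1) * Fv t + (1/2) * u powr (2 * \<nu> - 1) * (norm (x' t))\<^sup>2"
    unfolding e Wf_def by (simp add: algebra_simps)
  also have "\<dots> \<le> u powr (2 * \<nu> - 1) * Fv t + (1/2) * u powr (2 * \<nu> - \<alpha>) * (norm (x' t))\<^sup>2"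
    using pm by (intro add_left_mono mult_right_mono) auto
  also have "\<dots> \<le> KD * D t"
  proof -
    have K1': "1 \<le> KD" using c_pos by (simp add: KD_def)
    have K2: "1/2 \<le> KD * (c / 2)" using c_pos by (simp add: KD_def field_simps)
    have a1: "u powr (2 * \<nu> - 1) * Fv t \<le> KD * (u powr (2 * \<nu> - 1) * Fv t)"
    proof -
      have "0 \<le> u powr (2 * \<nu> - 1) * Fv t" using Fv_nonneg[of t] by simp
      then have "1 * (u powr (2 * \<nu> - 1) * Fv t) \<le> KD * (u powr (2 * \<nu> - 1) * Fv t)"
        by (rule mult_right_mono[OF K1'])
      then show ?thesis by simp
    qed
    have a2: "(1/2) * u powr (2 * \<nu> - \<alpha>) * (norm (x' t))\<^sup>2 \<le> (KD * (c / 2)) * u powr (2 * \<nu> - \<alpha>) * (norm (x' t))\<^sup>2"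
      using K2 by (intro mult_right_mono) auto
    show ?thesis using a1 a2 unfolding D_def u_def[symmetric] by (simp add: algebra_simps)
  qed
  finally show ?thesis .
qed

end


context hb
begin

definition "gw \<tau> = (1 + \<tau>) powr \<nu> * norm (g \<tau>)"
definition "H t = KU * integral {T0..t} D + Cv * integral {T0..t} gw"

lemma KU_nonneg: "0 \<le> KU" using nu0 c_pos by (simp add: KU_def)
lemma KD_pos: "0 < KD" using c_pos by (simp add: KD_def add_pos_nonneg)
lemma DB_nonneg: "0 \<le> DB"
proof -
  have "0 \<le> integral {T0..T0} D" by simp
  then show ?thesis using intD_le[OF order_refl] by linarith
qed

lemma H_diff: assumes "T0 \<le> a" "a \<le> b"
  shows "H b - H a = KU * integral {a..b} D + Cv * integral {a..b} gw"
proof -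
  have iD: "D integrable_on {T0..b}" using T00 by (intro integrable_continuous_real cont_D)
  have ig: "gw integrable_on {T0..b}" unfolding gw_def using gw_sub[OF T00] .
  have e1: "integral {T0..a} D + integral {a..b} D = integral {T0..b} D"
    by (rule Henstock_Kurzweil_Integration.integral_combine) (use assms iD in auto)
  have e2: "integral {T0..a} gw + integral {a..b} gw = integral {T0..b} gw"
    by (rule Henstock_Kurzweil_Integration.integral_combine) (use assms ig in auto)
  show ?thesis unfolding H_def e1[symmetric] e2[symmetric] by (simp add: algebra_simps)
qed

lemma H_mono: assumes "T0 \<le> a" "a \<le> b" shows "H a \<le> H b"
proof -
  have "0 \<le> integral {a..b} D" using assms T00 by (intro intD_nonneg) auto
  moreover have "0 \<le> integral {a..b} gw" unfolding gw_def
    using assms T00 by (intro integral_nonneg gw_sub) auto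
  ultimately have "0 \<le> KU * integral {a..b} D + Cv * integral {a..b} gw"
    using KU_nonneg Cv_nonneg by simp
  then show ?thesis using H_diff[OF assms] by simp
qed

lemma H_bdd: assumes "T0 \<le> t" shows "H t \<le> KU * DB + Cv * Bg"
proof -
  have "integral {T0..t} gw \<le> Bg" unfolding gw_def using Bg_ge[OF T00] .
  then show ?thesis unfolding H_def using intD_le[OF assms] KU_nonneg Cv_nonneg
    by (intro add_mono mult_left_mono) auto
qed

lemma U_H: assumes "T0 \<le> a" "a \<le> b" shows "U b - U a \<le> H b - H a"
  using U_int[OF assms] H_diff[OF assms] unfolding gw_def[abs_def] by simp

lemma ln_int: fixes a b :: real assumes "0 \<le> a" "a \<le> b"
  shows "integral {a..b} (\<lambda>\<tau>. 1 / (1 + \<tau>)) = ln (1 + b) - ln (1 + a)"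
proof -
  have "((\<lambda>\<tau>. 1 / (1 + \<tau>)) has_integral (ln (1 + b) - ln (1 + a))) {a..b}"
  proof (rule fundamental_theorem_of_calculus[OF assms(2)])
    fix s assume "s \<in> {a..b}"
    then have pos: "0 < 1 + s" using assms by simp
    have "((\<lambda>s. ln (1 + s)) has_real_derivative (1 / (1 + s))) (at s within {a..b})"
      using pos by (auto intro!: derivative_eq_intros)
    then show "((\<lambda>s. ln (1 + s)) has_vector_derivative 1 / (1 + s)) (at s within {a..b})"
      by (simp add: has_real_derivative_iff_has_vector_derivative)
  qed
  then show ?thesis by (rule integral_unique)
qed

lemma U_small: assumes e: "\<epsilon> > 0" shows "\<exists>T. \<forall>t\<ge>T. U t \<le> \<epsilon>"
proof -
  define S where "S = Sup (H ` {T0..})"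
  have bdd: "bdd_above (H ` {T0..})" using H_bdd by (auto intro!: bdd_aboveI)
  have ne: "H ` {T0..} \<noteq> {}" by auto
  have HS: "H t \<le> S" if "T0 \<le> t" for t unfolding S_def using bdd that by (intro cSup_upper) auto
  obtain t1 where t1: "T0 \<le> t1" and St1: "S - \<epsilon> / 2 < H t1"
  proof -
    have "S - \<epsilon> / 2 < S" using e by simp
    then obtain y where "y \<in> H ` {T0..}" "S - \<epsilon> / 2 < y" unfolding S_def using less_cSupD[OF ne] by blast
    then show ?thesis using that by auto
  qed
  have t10: "0 \<le> t1" using t1 T00 by simp
  have "\<exists>t2\<ge>t1. U t2 < \<epsilon> / 2"
  proof (rule ccontr)
    assume "\<not> (\<exists>t2\<ge>t1. U t2 < \<epsilon> / 2)"
    then have Ug: "\<And>t. t1 \<le> t \<Longrightarrow> \<epsilon> / 2 \<le> U t" by force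
    define K where "K = 2 * KD * DB / \<epsilon> + 1"
    have K0: "0 \<le> K" using KD_pos DB_nonneg e by (simp add: K_def)
    define Tb where "Tb = (1 + t1) * exp K - 1"
    have eK: "1 \<le> exp K" using K0 by simp
    have Tb: "t1 \<le> Tb" using eK t10 unfolding Tb_def
      by (metis add.commute diff_add_cancel le_diff_eq mult.right_neutral mult_left_mono add_nonneg_nonneg zero_le_one)
    have lnTb: "ln (1 + Tb) - ln (1 + t1) = K" unfolding Tb_def using t10 by (simp add: ln_mult)
    have cU: "continuous_on {t1..Tb} (\<lambda>\<tau>. U \<tau> / (1 + \<tau>))"
      using cont_U[OF t10] t10 by (intro continuous_intros) auto
    have "integral {t1..Tb} (\<lambda>\<tau>. (\<epsilon> / 2) * (1 / (1 + \<tau>))) \<le> integral {t1..Tb} (\<lambda>\<tau>. U \<tau> / (1 + \<tau>))"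
    proof (rule integral_le)
      show "(\<lambda>\<tau>. (\<epsilon> / 2) * (1 / (1 + \<tau>))) integrable_on {t1..Tb}"
        using t10 by (intro integrable_continuous_real continuous_intros) auto
      show "(\<lambda>\<tau>. U \<tau> / (1 + \<tau>)) integrable_on {t1..Tb}" by (rule integrable_continuous_real[OF cU])
      fix \<tau> assume "\<tau> \<in> {t1..Tb}"
      then have "\<epsilon> / 2 \<le> U \<tau>" "0 < 1 + \<tau>" using Ug t10 by auto
      then have "(\<epsilon> / 2) / (1 + \<tau>) \<le> U \<tau> / (1 + \<tau>)" by (intro divide_right_mono) auto
      then show "(\<epsilon> / 2) * (1 / (1 + \<tau>)) \<le> U \<tau> / (1 + \<tau>)" by simp
    qed
    also have "\<dots> \<le> integral {t1..Tb} (\<lambda>\<tau>. KD * D \<tau>)"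
    proof (rule integral_le)
      show "(\<lambda>\<tau>. U \<tau> / (1 + \<tau>)) integrable_on {t1..Tb}" by (rule integrable_continuous_real[OF cU])
      show "(\<lambda>\<tau>. KD * D \<tau>) integrable_on {t1..Tb}"
        using t10 by (intro integrable_continuous_real continuous_intros cont_D) auto
      fix \<tau> assume "\<tau> \<in> {t1..Tb}"
      then show "U \<tau> / (1 + \<tau>) \<le> KD * D \<tau>" using U_over t10 by auto
    qed
    also have "\<dots> = KD * integral {t1..Tb} D" by simp
    also have "\<dots> \<le> KD * integral {T0..Tb} D"
    proof -
      have "integral {t1..Tb} D \<le> integral {T0..Tb} D"
        using t1 T00 Tb by (intro integral_subset_le integrable_continuous_real cont_D) (auto simp: D_nonneg)
      then show ?thesis using KD_pos by simp
    qed
    also have "\<dots> \<le> KD * DB" using intD_le[of Tb] t1 Tb KD_pos by simp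
    finally have A: "integral {t1..Tb} (\<lambda>\<tau>. (\<epsilon> / 2) * (1 / (1 + \<tau>))) \<le> KD * DB" .
    have "integral {t1..Tb} (\<lambda>\<tau>. (\<epsilon> / 2) * (1 / (1 + \<tau>))) = (\<epsilon> / 2) * integral {t1..Tb} (\<lambda>\<tau>. 1 / (1 + \<tau>))"
      by (rule integral_mult_right)
    also have "\<dots> = (\<epsilon> / 2) * K" using ln_int[OF t10 Tb] lnTb by simp
    also have "\<dots> = KD * DB + \<epsilon> / 2" using e by (simp add: K_def field_simps)
    finally show False using A e by simp
  qed
  then obtain t2 where t2: "t1 \<le> t2" "U t2 < \<epsilon> / 2" by blast
  show ?thesis
  proof (intro exI allI impI)
    fix t assume t: "t2 \<le> t"
    have "U t \<le> U t2 + (H t - H t2)" using U_H[of t2 t] t t1 t2 by simp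
    moreover have "H t1 \<le> H t2" using H_mono t1 t2 by simp
    moreover have "H t \<le> S" using HS t t1 t2 by simp
    ultimately show "U t \<le> \<epsilon>" using St1 t2 by linarith
  qed
qed

lemma partA: "(\<lambda>t. (1/2) * (norm (x' t))\<^sup>2 + \<Phi> (x t) - (INF y. \<Phi> y)) \<in> o[at_top](\<lambda>t. 1 / t powr (2 * \<nu>))"
proof (rule landau_o.smallI)
  fix \<epsilon> :: real assume e: "\<epsilon> > 0"
  obtain T where T: "\<And>t. t \<ge> T \<Longrightarrow> U t \<le> \<epsilon>" using U_small[OF e] by blast
  show "\<forall>\<^sub>F t in at_top. norm ((1/2) * (norm (x' t))\<^sup>2 + \<Phi> (x t) - (INF y. \<Phi> y)) \<le> \<epsilon> * norm (1 / t powr (2 * \<nu>))"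
  proof (rule eventually_at_top_linorderI[of "max T 1"])
    fix t assume t: "max T 1 \<le> t"
    then have t1: "1 \<le> t" and tT: "T \<le> t" by auto
    have eqW: "(1/2) * (norm (x' t))\<^sup>2 + \<Phi> (x t) - (INF y. \<Phi> y) = Wf t"
      by (simp add: Wf_def Fv_def Inf_eq)
    have W0: "0 \<le> Wf t" using Fv_nonneg by (simp add: Wf_def)
    have p1: "0 < t powr (2 * \<nu>)" using t1 by simp
    have p2: "t powr (2 * \<nu>) \<le> (1 + t) powr (2 * \<nu>)" using t1 nu0 by (intro powr_mono2) auto
    have p3: "0 < (1 + t) powr (2 * \<nu>)" using t1 by simp
    have "Wf t * (1 + t) powr (2 * \<nu>) \<le> \<epsilon>" using T[OF tT] by (simp add: U_def mult.commute)
    then have "Wf t \<le> \<epsilon> / (1 + t) powr (2 * \<nu>)" by (simp add: pos_le_divide_eq[OF p3])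
    also have "\<dots> \<le> \<epsilon> / t powr (2 * \<nu>)" using e p1 p2 p3 by (intro divide_left_mono mult_pos_pos) auto
    finally have "Wf t \<le> \<epsilon> * (1 / t powr (2 * \<nu>))" by simp
    then show "norm ((1/2) * (norm (x' t))\<^sup>2 + \<Phi> (x t) - (INF y. \<Phi> y)) \<le> \<epsilon> * norm (1 / t powr (2 * \<nu>))"
      unfolding eqW using W0 p1 by simp
  qed
qed

end

theorem theorem2:
  fixes \<Phi> :: "'a::{real_inner, complete_space} \<Rightarrow> real"
    and gradPhi :: "'a \<Rightarrow> 'a"
    and x x' x'' g :: "real \<Rightarrow> 'a"
    and c \<alpha> \<nu> :: real
  assumes convex: "convex_on UNIV \<Phi>"
    and grad: "\<And>u. (\<Phi> has_derivative (\<lambda>h. gradPhi u \<bullet> h)) (at u)"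
    and C1: "continuous_on UNIV gradPhi"
    and argmin_ne: "\<exists>v. \<forall>y. \<Phi> v \<le> \<Phi> y"
    and c_pos: "c > 0"
    and alpha: "0 \<le> \<alpha>" "\<alpha> < 1"
    and g_L1: "g integrable_on {0..}" "(\<lambda>t. norm (g t)) integrable_on {0..}"
    and x_prim: "\<And>t. t \<ge> 0 \<Longrightarrow> (x' has_integral (x t - x 0)) {0..t}"
    and x'_prim: "\<And>t. t \<ge> 0 \<Longrightarrow> (x'' has_integral (x' t - x' 0)) {0..t}"
    and x''_loc: "\<And>T. T \<ge> 0 \<Longrightarrow> (\<lambda>t. norm (x'' t)) integrable_on {0..T}"
    and ode: "AE t in lebesgue. t \<ge> 0 \<longrightarrow>
               x'' t + (c / (1 + t) powr \<alpha>) *\<^sub>R x' t + gradPhi (x t) = g t"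
    and nu: "\<alpha> \<le> \<nu>" "\<nu> \<le> (1 + \<alpha>) / 2"
    and g_weighted: "(\<lambda>t. (1 + t) powr \<nu> * norm (g t)) integrable_on {0..}"
  shows "((\<lambda>t. (1/2) * (norm (x' t))\<^sup>2 + \<Phi> (x t) - (INF y. \<Phi> y))
            \<in> o[at_top](\<lambda>t. 1 / t powr (2 * \<nu>)))
         \<and> ((\<lambda>t. (1 + t) powr (2 * \<nu> - \<alpha>) * (norm (x' t))\<^sup>2) integrable_on {0..})"
proof -
  interpret hb \<Phi> gradPhi x x' x'' g c \<alpha> \<nu>
    by (rule hb.intro[OF convex grad C1 argmin_ne c_pos alpha g_L1 x_prim x'_prim x''_loc ode nu g_weighted])
  show ?thesis using partA partB unfolding FB_def[abs_def] by blast
qed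

end
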